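(* $(\mathfrak{P}(X),\preceq)$ is a bounded graded poset with minimum element $\{(\{x\},\emptyset):x\in X\}$ and maximum element $\{(X,\emptyset)\}$. Its height function is $h:\mathfrak{P}(X)\to\{0,1,\dots,|X|-1\}$, $h(\mathcal{S})=|X|-|\mathcal{P}(\mathcal{S})|+|\mathcal{H}(\mathcal{S})|$.
   Context: Let $X$ be a finite non-empty set. A set pair system on $X$ is a set of ordered pairs $(S,H)$ of subsets of $X$ with $S\ne\emptyset$ and $S\cap H=\emptyset$. On set pairs, $(S_1,H_1)\le(S_2,H_2)$ iff they are equal or one of: $S_1\cup H_1\subseteq S_2$; $S_1\cup H_1\subseteq H_2$; $S_1\subsetneq S_2$ and $H_1=H_2\ne\emptyset$. For set pair systems, $\mathcal{S}_1\preceq\mathcal{S}_2$ iff (SP1) for every $(S_1,H_1)\in\mathcal{S}_1$ there is $(S_2,H_2)\in\mathcal{S}_2$ with $(S_1,H_1)\le(S_2,H_2)$, and (SP2) for every $(S_2,H_2)\in\mathcal{S}_2$ with $H_2\ne\emptyset$, if some $(S_1,H_1)\in\mathcal{S}_1$ has $H_1=H_2$ then some such $(S_1,H_1)$ satisfies $(S_1,H_1)\le(S_2,H_2)$. A polestar system is a set pair system $\mathcal{S}$ with (PL1) $\mathcal{P}(\mathcal{S})=\{S:(S,H)\in\mathcal{S}\}$ is a partition of $X$; (PL2) distinct $(S,H),(S',H')\in\mathcal{S}$ have $S\ne S'$; (PL3) for each $(S,H)\in\mathcal{S}$ with $H\ne\emptyset$, $(H,\emptyset)\in\mathcal{S}$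 and there is exactly one $(S',H')\in\mathcal{S}$ with $(S',H')\ne(S,H)$ and $H'=H$. $\mathcal{H}(\mathcal{S})=\{H:(S,H)\in\mathcal{S},H\ne\emptyset\}$; $\mathfrak{P}(X)$ is the set of polestar systems on $X$. A poset is bounded if it has a minimum and a maximum; a chain is a non-empty set of pairwise comparable elements, of length (number of elements minus one); the poset is graded if all maximal chains have the same length; its height function assigns to $a$ the maximum length of a chain all of whose elements are $\le a$. *)

theory Defs
  imports Main
begin

type_synonym 'a setpair = "'a set \<times> 'a set"
type_synonym 'a sps = "'a setpair set"

definition set_pair_system :: "'a set \<Rightarrow> 'a sps \<Rightarrow> bool" where
  "set_pair_system X \<S> \<longleftrightarrow>
     (\<forall>(S,H)\<in>\<S>. S \<subseteq> X \<and> H \<subseteq> X \<and> S \<noteq> {} \<and> S \<inter> H = {})"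

definition sp_le :: "'a setpair \<Rightarrow> 'a setpair \<Rightarrow> bool" where
  "sp_le p q \<longleftrightarrow> (case p of (S1,H1) \<Rightarrow> case q of (S2,H2) \<Rightarrow>
      p = q \<or> S1 \<union> H1 \<subseteq> S2 \<or> S1 \<union> H1 \<subseteq> H2 \<or> (S1 \<subset> S2 \<and> H1 = H2 \<and> H2 \<noteq> {}))"

definition sps_le :: "'a sps \<Rightarrow> 'a sps \<Rightarrow> bool" where
  "sps_le \<S>1 \<S>2 \<longleftrightarrow>
     (\<forall>p1\<in>\<S>1. \<exists>p2\<in>\<S>2. sp_le p1 p2) \<and>
     (\<forall>(S2,H2)\<in>\<S>2. H2 \<noteq> {} \<longrightarrow>
        (\<exists>(S1,H1)\<in>\<S>1. H1 = H2) \<longrightarrow> (\<exists>(S1,H1)\<in>\<S>1. H1 = H2 \<and> sp_le (S1,H1) (S2,H2)))"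

definition parts :: "'a sps \<Rightarrow> 'a set set" where
  "parts \<S> = {S. \<exists>H. (S,H) \<in> \<S>}"

definition holes :: "'a sps \<Rightarrow> 'a set set" where
  "holes \<S> = {H. H \<noteq> {} \<and> (\<exists>S. (S,H) \<in> \<S>)}"

definition is_partition :: "'a set \<Rightarrow> 'a set set \<Rightarrow> bool" where
  "is_partition X P \<longleftrightarrow> (\<forall>B\<in>P. B \<noteq> {}) \<and> \<Union>P = X \<and>
     (\<forall>B\<in>P. \<forall>C\<in>P. B \<noteq> C \<longrightarrow> B \<inter> C = {})"

definition polestar_system :: "'a set \<Rightarrow> 'a sps \<Rightarrow> bool" where
  "polestar_system X \<S> \<longleftrightarrow> set_pair_system X \<S> \<and>
     is_partition X (parts \<S>) \<and>
     (\<forall>p\<in>\<S>. \<forall>q\<in>\<S>. p \<noteq> q \<longrightarrow> fst p \<noteq> fst q) \<and>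
     (\<forall>(S,H)\<in>\<S>. H \<noteq> {} \<longrightarrow>
        (H, {}) \<in> \<S> \<and> (\<exists>!q. q \<in> \<S> \<and> q \<noteq> (S,H) \<and> snd q = H))"

definition polestars :: "'a set \<Rightarrow> 'a sps set" where
  "polestars X = {\<S>. polestar_system X \<S>}"

definition partial_order_on' :: "'b set \<Rightarrow> ('b \<Rightarrow> 'b \<Rightarrow> bool) \<Rightarrow> bool" where
  "partial_order_on' P le \<longleftrightarrow>
     (\<forall>a\<in>P. le a a) \<and>
     (\<forall>a\<in>P. \<forall>b\<in>P. le a b \<and> le b a \<longrightarrow> a = b) \<and>
     (\<forall>a\<in>P. \<forall>b\<in>P. \<forall>c\<in>P. le a b \<and> le b c \<longrightarrow> le a c)"

definition is_min :: "'b set \<Rightarrow> ('b \<Rightarrow> 'b \<Rightarrow> bool) \<Rightarrow> 'b \<Rightarrow> bool" where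
  "is_min P le m \<longleftrightarrow> m \<in> P \<and> (\<forall>a\<in>P. le m a)"

definition is_max :: "'b set \<Rightarrow> ('b \<Rightarrow> 'b \<Rightarrow> bool) \<Rightarrow> 'b \<Rightarrow> bool" where
  "is_max P le m \<longleftrightarrow> m \<in> P \<and> (\<forall>a\<in>P. le a m)"

definition bounded_poset :: "'b set \<Rightarrow> ('b \<Rightarrow> 'b \<Rightarrow> bool) \<Rightarrow> bool" where
  "bounded_poset P le \<longleftrightarrow> partial_order_on' P le \<and>
     (\<exists>m. is_min P le m) \<and> (\<exists>M. is_max P le M)"

definition is_chain :: "'b set \<Rightarrow> ('b \<Rightarrow> 'b \<Rightarrow> bool) \<Rightarrow> 'b set \<Rightarrow> bool" where
  "is_chain P le C \<longleftrightarrow> C \<noteq> {} \<and> C \<subseteq> P \<and> (\<forall>a\<in>C. \<forall>b\<in>C. le a b \<or> le b a)"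

definition chain_length :: "'b set \<Rightarrow> nat" where
  "chain_length C = card C - 1"

definition maximal_chain :: "'b set \<Rightarrow> ('b \<Rightarrow> 'b \<Rightarrow> bool) \<Rightarrow> 'b set \<Rightarrow> bool" where
  "maximal_chain P le C \<longleftrightarrow> is_chain P le C \<and>
     (\<forall>D. is_chain P le D \<and> C \<subseteq> D \<longrightarrow> D = C)"

definition graded :: "'b set \<Rightarrow> ('b \<Rightarrow> 'b \<Rightarrow> bool) \<Rightarrow> bool" where
  "graded P le \<longleftrightarrow> (\<forall>C D. maximal_chain P le C \<and> maximal_chain P le D \<longrightarrow>
       chain_length C = chain_length D)"

definition height :: "'b set \<Rightarrow> ('b \<Rightarrow> 'b \<Rightarrow> bool) \<Rightarrow> 'b \<Rightarrow> nat" where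
  "height P le a = Max {chain_length C | C. is_chain P le C \<and> (\<forall>c\<in>C. le c a)}"

end

theory Submission
  imports Defs
begin


abbreviation ps where "ps X A \<equiv> polestar_system X A"

lemma psD:
  assumes "ps X A"
  shows "set_pair_system X A" "is_partition X (parts A)"
    "\<forall>p\<in>A. \<forall>q\<in>A. p \<noteq> q \<longrightarrow> fst p \<noteq> fst q"
    "\<forall>(S,H)\<in>A. H \<noteq> {} \<longrightarrow> (H, {}) \<in> A \<and> (\<exists>!q. q \<in> A \<and> q \<noteq> (S,H) \<and> snd q = H)"
  using assms unfolding polestar_system_def by auto

lemma ps_sub: "ps X A \<Longrightarrow> (S,H)\<in>A \<Longrightarrow> S \<subseteq> X \<and> H \<subseteq> X \<and> S \<noteq> {} \<and> S\<inter>H={}"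
  using psD(1) unfolding set_pair_system_def by fast

lemma ps_disj: assumes "ps X A" "(S,H)\<in>A" "(S',H')\<in>A" "S\<inter>S'\<noteq>{}"
  shows "S=S' \<and> H=H'"
proof -
  have P: "S \<in> parts A" "S' \<in> parts A" using assms(2,3) unfolding parts_def by auto
  have "\<forall>B\<in>parts A. \<forall>C\<in>parts A. B \<noteq> C \<longrightarrow> B \<inter> C = {}"
    using psD(2)[OF assms(1)] unfolding is_partition_def by (elim conjE)
  hence "S = S'" using P assms(4) by blast
  moreover have "H = H'"
  proof (rule ccontr)
    assume "H \<noteq> H'"
    hence "(S,H) \<noteq> (S',H')" by simp
    have "\<forall>q\<in>A. (S,H) \<noteq> q \<longrightarrow> fst (S,H) \<noteq> fst q" using psD(3)[OF assms(1)] assms(2) by (rule bspec)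
    hence "(S,H) \<noteq> (S',H') \<longrightarrow> fst (S,H) \<noteq> fst (S',H')" using assms(3) by (rule bspec)
    with \<open>(S,H) \<noteq> (S',H')\<close> \<open>S=S'\<close> show False by simp
  qed
  ultimately show ?thesis by simp
qed

lemma ps_cover: assumes "ps X A" "x \<in> X" shows "\<exists>S H. (S,H)\<in>A \<and> x\<in>S"
proof -
  have "\<Union>(parts A) = X" using psD(2)[OF assms(1)] unfolding is_partition_def by blast
  thus ?thesis using assms unfolding parts_def by auto
qed

lemma ps4: assumes "ps X A" "(S,H)\<in>A" "H\<noteq>{}"
  shows "(H,{})\<in>A \<and> (\<exists>!q. q\<in>A \<and> q\<noteq>(S,H) \<and> snd q = H)"
proof -
  have "case (S,H) of (S,H) \<Rightarrow> H \<noteq> {} \<longrightarrow> (H, {}) \<in> A \<and> (\<exists>!q. q \<in> A \<and> q \<noteq> (S,H) \<and> snd q = H)"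
    by (rule bspec[OF psD(4)[OF assms(1)] assms(2)])
  thus ?thesis using assms(3) by simp
qed

lemma ps_pole: "ps X A \<Longrightarrow> (S,H)\<in>A \<Longrightarrow> H \<noteq> {} \<Longrightarrow> (H,{})\<in>A"
  using ps4 by blast

lemma ps_two: assumes "ps X A" "(S,H)\<in>A" "H \<noteq> {}" shows "\<exists>S'. S'\<noteq>S \<and> (S',H)\<in>A"
proof -
  from ps4[OF assms] obtain q where "q \<in> A" "q \<noteq> (S,H)" "snd q = H"
    by blast
  thus ?thesis by (metis prod.collapse)
qed

lemma ps_three: assumes "ps X A" "(S1,H)\<in>A" "(S2,H)\<in>A" "(S3,H)\<in>A" "H \<noteq> {}"
  shows "S1=S2 \<or> S1=S3 \<or> S2=S3"
proof (rule ccontr)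
  assume n: "\<not> (S1=S2 \<or> S1=S3 \<or> S2=S3)"
  from ps4[OF assms(1,2,5)] have u: "\<exists>!q. q\<in>A \<and> q\<noteq>(S1,H) \<and> snd q = H" by blast
  have "(S2,H) = (S3,H)"
    apply (rule ex1E[OF u])
    using n assms by (metis Pair_inject snd_conv)
  thus False using n by simp
qed

lemma ps_intro:
  assumes C1: "\<And>S H. (S,H)\<in>C \<Longrightarrow> S \<subseteq> X \<and> H \<subseteq> X \<and> S \<noteq> {} \<and> S\<inter>H={}"
  and C2: "\<And>x. x\<in>X \<Longrightarrow> \<exists>S H. (S,H)\<in>C \<and> x\<in>S"
  and C3: "\<And>S H S' H'. (S,H)\<in>C \<Longrightarrow> (S',H')\<in>C \<Longrightarrow> S\<inter>S'\<noteq>{} \<Longrightarrow> S=S' \<and> H=H'"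
  and C4: "\<And>S H. (S,H)\<in>C \<Longrightarrow> H\<noteq>{} \<Longrightarrow> (H,{})\<in>C"
  and C5: "\<And>S H. (S,H)\<in>C \<Longrightarrow> H\<noteq>{} \<Longrightarrow> \<exists>S'. S'\<noteq>S \<and> (S',H)\<in>C"
  and C6: "\<And>S1 S2 S3 H. (S1,H)\<in>C \<Longrightarrow> (S2,H)\<in>C \<Longrightarrow> (S3,H)\<in>C \<Longrightarrow> H\<noteq>{} \<Longrightarrow> S1=S2 \<or> S1=S3 \<or> S2=S3"
  shows "ps X C"
  unfolding polestar_system_def
proof (intro conjI)
  show "set_pair_system X C" unfolding set_pair_system_def
  proof (intro ballI)
    fix p assume "p \<in> C" 
    thus "case p of (S, H) \<Rightarrow> S \<subseteq> X \<and> H \<subseteq> X \<and> S \<noteq> {} \<and> S \<inter> H = {}"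
      using C1 by (cases p) simp
  qed
  show "is_partition X (parts C)" unfolding is_partition_def
  proof (intro conjI ballI impI)
    fix B assume "B \<in> parts C" thus "B \<noteq> {}" using C1 unfolding parts_def by auto
  next
    show "\<Union> (parts C) = X"
    proof
      show "\<Union> (parts C) \<subseteq> X"
      proof
        fix x assume "x \<in> \<Union> (parts C)"
        then obtain S H where "(S,H)\<in>C" "x \<in> S" unfolding parts_def by auto
        thus "x \<in> X" using C1 by blast
      qed
      show "X \<subseteq> \<Union> (parts C)"
      proof
        fix x assume "x \<in> X" 
        then obtain S H where "(S,H)\<in>C" "x\<in>S" using C2 by blast
        thus "x \<in> \<Union> (parts C)" unfolding parts_def by auto
      qed
    qed
  next
    fix B D assume "B \<in> parts C" "D \<in> parts C" "B \<noteq> D"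
    then obtain H K where "(B,H)\<in>C" "(D,K)\<in>C" unfolding parts_def by auto
    thus "B \<inter> D = {}" using C3 \<open>B\<noteq>D\<close> by blast
  qed
  show "\<forall>p\<in>C. \<forall>q\<in>C. p \<noteq> q \<longrightarrow> fst p \<noteq> fst q"
  proof (intro ballI impI)
    fix p q assume pq: "p\<in>C" "q\<in>C" "p\<noteq>q"
    obtain S H where p: "p = (S,H)" by force
    obtain S' H' where q: "q = (S',H')" by force
    show "fst p \<noteq> fst q"
    proof
      assume "fst p = fst q"
      hence "S = S'" using p q by simp
      moreover have "S \<noteq> {}" using C1 pq p by blast
      ultimately have "S \<inter> S' \<noteq> {}" by simp
      hence "H = H'" using C3 pq p q by blast
      thus False using pq p q \<open>S=S'\<close> by simp
    qed
  qed
  show "\<forall>(S, H)\<in>C. H \<noteq> {} \<longrightarrow> (H, {}) \<in> C \<and> (\<exists>!q. q \<in> C \<and> q \<noteq> (S, H) \<and> snd q = H)"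
  proof (intro ballI)
    fix p assume pC: "p \<in> C"
    obtain S H where p: "p = (S,H)" by force
    have "H \<noteq> {} \<longrightarrow> (H, {}) \<in> C \<and> (\<exists>!q. q \<in> C \<and> q \<noteq> (S, H) \<and> snd q = H)"
    proof
      assume h: "H\<noteq>{}"
      have sh: "(S,H)\<in>C" using pC p by simp
      obtain S' where s': "S'\<noteq>S" "(S',H)\<in>C" using C5[OF sh h] by blast
      have "\<exists>!q. q \<in> C \<and> q \<noteq> (S, H) \<and> snd q = H"
      proof (rule ex1I[of _ "(S',H)"])
        show "(S', H) \<in> C \<and> (S', H) \<noteq> (S, H) \<and> snd (S', H) = H" using s' by simp
        fix q assume q: "q \<in> C \<and> q \<noteq> (S, H) \<and> snd q = H"
        obtain a b where ab: "q = (a,b)" by force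
        with q have a: "(a,H)\<in>C" "a \<noteq> S" by auto
        have "S = S' \<or> S = a \<or> S' = a" by (rule C6[OF sh s'(2) a(1) h])
        thus "q = (S',H)" using ab q a s' by auto
      qed
      thus "(H, {}) \<in> C \<and> (\<exists>!q. q \<in> C \<and> q \<noteq> (S, H) \<and> snd q = H)" using C4[OF sh h] by blast
    qed
    thus "case p of (S, H) \<Rightarrow> H \<noteq> {} \<longrightarrow> (H, {}) \<in> C \<and> (\<exists>!q. q \<in> C \<and> q \<noteq> (S, H) \<and> snd q = H)"
      using p by simp
  qed
qed

lemma ps_finite: assumes "ps X A" shows "A \<subseteq> Pow X \<times> Pow X"
proof
  fix p assume "p \<in> A"
  moreover obtain S H where "p = (S,H)" by force
  ultimately show "p \<in> Pow X \<times> Pow X" using ps_sub[OF assms, of S H] by auto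
qed

lemma card_parts: assumes "ps X A" "finite X" shows "card (parts A) \<le> card X"
proof -
  have "parts A \<subseteq> (\<lambda>x. THE S. \<exists>H. (S,H)\<in>A \<and> x \<in> S) ` X"
  proof
    fix S assume "S \<in> parts A"
    then obtain H where sh: "(S,H)\<in>A" unfolding parts_def by auto
    then obtain x where x: "x \<in> S" "x \<in> X" using ps_sub[OF assms(1)] by blast
    have "(THE S. \<exists>H. (S,H)\<in>A \<and> x \<in> S) = S"
    proof (rule the_equality)
      show "\<exists>H. (S,H)\<in>A \<and> x \<in> S" using sh x by blast
      fix S' assume "\<exists>H. (S',H)\<in>A \<and> x \<in> S'"
      then obtain H' where h': "(S',H')\<in>A" "x\<in>S'" by blast
      thus "S' = S" using ps_disj[OF assms(1) h'(1) sh] x by blast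
    qed
    thus "S \<in> (\<lambda>x. THE S. \<exists>H. (S,H)\<in>A \<and> x \<in> S) ` X" using x by force
  qed
  hence "card (parts A) \<le> card ((\<lambda>x. THE S. \<exists>H. (S,H)\<in>A \<and> x \<in> S) ` X)"
    by (rule card_mono[OF finite_imageI[OF assms(2)]])
  also have "\<dots> \<le> card X" by (rule card_image_le[OF assms(2)])
  finally show ?thesis .
qed

definition psle :: "'a sps \<Rightarrow> 'a sps \<Rightarrow> bool" where
 "psle A B \<longleftrightarrow> (\<forall>(S,H)\<in>A. \<exists>(T,K)\<in>B. S \<subseteq> T \<and> (H \<subseteq> T \<or> K = H)) \<and>
   (\<forall>(T,K)\<in>B. K\<noteq>{} \<longrightarrow> (\<exists>(S,H)\<in>A. H=K) \<longrightarrow> (\<exists>(S,H)\<in>A. H=K \<and> S \<subseteq> T))"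

lemma psleI:
  assumes a1: "\<And>S H. (S,H)\<in>A \<Longrightarrow> \<exists>T K. (T,K)\<in>B \<and> S\<subseteq>T \<and> (H\<subseteq>T \<or> K=H)"
  and a2: "\<And>T K S. (T,K)\<in>B \<Longrightarrow> K\<noteq>{} \<Longrightarrow> (S,K)\<in>A \<Longrightarrow> \<exists>S'. (S',K)\<in>A \<and> S'\<subseteq>T"
  shows "psle A B"
proof -
  have 1: "\<forall>(S,H)\<in>A. \<exists>(T,K)\<in>B. S \<subseteq> T \<and> (H \<subseteq> T \<or> K = H)"
  proof
    fix p assume "p \<in> A"
    moreover obtain S H where "p = (S,H)" by force
    ultimately obtain T K where "(T,K)\<in>B" "S\<subseteq>T \<and> (H\<subseteq>T \<or> K=H)" using a1 by blast
    thus "case p of (S, H) \<Rightarrow> \<exists>(T, K)\<in>B. S \<subseteq> T \<and> (H \<subseteq> T \<or> K = H)"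
      using \<open>p = (S,H)\<close> by auto
  qed
  have 2: "\<forall>(T,K)\<in>B. K\<noteq>{} \<longrightarrow> (\<exists>(S,H)\<in>A. H=K) \<longrightarrow> (\<exists>(S,H)\<in>A. H=K \<and> S \<subseteq> T)"
  proof
    fix p assume "p \<in> B"
    moreover obtain T K where p: "p = (T,K)" by force
    ultimately have tk: "(T,K)\<in>B" by simp
    have "K\<noteq>{} \<longrightarrow> (\<exists>(S,H)\<in>A. H=K) \<longrightarrow> (\<exists>(S,H)\<in>A. H=K \<and> S \<subseteq> T)"
    proof (intro impI)
      assume k: "K\<noteq>{}" "\<exists>(S,H)\<in>A. H=K"
      then obtain S where "(S,K)\<in>A" by auto
      then obtain S' where "(S',K)\<in>A" "S'\<subseteq>T" using a2[OF tk k(1)] by blast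
      thus "\<exists>(S,H)\<in>A. H=K \<and> S \<subseteq> T" by auto
    qed
    thus "case p of (T,K) \<Rightarrow> K\<noteq>{} \<longrightarrow> (\<exists>(S,H)\<in>A. H=K) \<longrightarrow> (\<exists>(S,H)\<in>A. H=K \<and> S \<subseteq> T)"
      using p by simp
  qed
  show ?thesis unfolding psle_def using 1 2 by blast
qed

lemma psleD1: assumes "psle A B" "(S,H)\<in>A" shows "\<exists>T K. (T,K)\<in>B \<and> S\<subseteq>T \<and> (H\<subseteq>T \<or> K=H)"
proof -
  have "\<forall>(S,H)\<in>A. \<exists>(T,K)\<in>B. S \<subseteq> T \<and> (H \<subseteq> T \<or> K = H)" using assms(1) unfolding psle_def by (rule conjunct1)
  hence "case (S,H) of (S,H) \<Rightarrow> \<exists>(T,K)\<in>B. S \<subseteq> T \<and> (H \<subseteq> T \<or> K = H)" using assms(2) by (rule bspec)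
  hence "\<exists>(T,K)\<in>B. S \<subseteq> T \<and> (H \<subseteq> T \<or> K = H)" by simp
  then obtain p where "p \<in> B" "case p of (T,K) \<Rightarrow> S \<subseteq> T \<and> (H \<subseteq> T \<or> K = H)" by blast
  thus ?thesis by (cases p) auto
qed

lemma psleD2: assumes "psle A B" "(T,K)\<in>B" "K\<noteq>{}" "(S,K)\<in>A" shows "\<exists>S'. (S',K)\<in>A \<and> S'\<subseteq>T"
proof -
  have "\<forall>(T,K)\<in>B. K\<noteq>{} \<longrightarrow> (\<exists>(S,H)\<in>A. H=K) \<longrightarrow> (\<exists>(S,H)\<in>A. H=K \<and> S \<subseteq> T)"
    using assms(1) unfolding psle_def by (rule conjunct2)
  hence "case (T,K) of (T,K) \<Rightarrow> K\<noteq>{} \<longrightarrow> (\<exists>(S,H)\<in>A. H=K) \<longrightarrow> (\<exists>(S,H)\<in>A. H=K \<and> S \<subseteq> T)"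
    using assms(2) by (rule bspec)
  hence "(\<exists>(S,H)\<in>A. H=K) \<longrightarrow> (\<exists>(S,H)\<in>A. H=K \<and> S \<subseteq> T)" using assms(3) by simp
  moreover have "\<exists>(S,H)\<in>A. H=K" using assms(4) by blast
  ultimately have "\<exists>(S,H)\<in>A. H=K \<and> S \<subseteq> T" by blast
  then obtain p where "p \<in> A" "case p of (S,H) \<Rightarrow> H=K \<and> S \<subseteq> T" by blast
  thus ?thesis by (cases p) auto
qed

lemma sp_le_simp: "sp_le (S,H) (T,K) \<longleftrightarrow> (S,H)=(T,K) \<or> S\<union>H\<subseteq>T \<or> S\<union>H\<subseteq>K \<or> (S\<subset>T \<and> H=K \<and> K\<noteq>{})"
  unfolding sp_le_def by simp

lemma spsD1: assumes "sps_le A B" "(S,H)\<in>A" shows "\<exists>T K. (T,K)\<in>B \<and> sp_le (S,H) (T,K)"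
proof -
  have "\<forall>p1\<in>A. \<exists>p2\<in>B. sp_le p1 p2" using assms(1) unfolding sps_le_def by (rule conjunct1)
  hence "\<exists>p2\<in>B. sp_le (S,H) p2" using assms(2) by (rule bspec)
  then obtain p2 where "p2\<in>B" "sp_le (S,H) p2" ..
  thus ?thesis by (metis surj_pair)
qed

lemma spsD2: assumes "sps_le A B" "(T,K)\<in>B" "K\<noteq>{}" "(S,K)\<in>A"
  shows "\<exists>S'. (S',K)\<in>A \<and> sp_le (S',K) (T,K)"
proof -
  have "\<forall>(S2,H2)\<in>B. H2 \<noteq> {} \<longrightarrow> (\<exists>(S1,H1)\<in>A. H1 = H2) \<longrightarrow> (\<exists>(S1,H1)\<in>A. H1 = H2 \<and> sp_le (S1,H1) (S2,H2))"
    using assms(1) unfolding sps_le_def by (rule conjunct2)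
  hence "case (T,K) of (S2,H2) \<Rightarrow> H2 \<noteq> {} \<longrightarrow> (\<exists>(S1,H1)\<in>A. H1 = H2) \<longrightarrow> (\<exists>(S1,H1)\<in>A. H1 = H2 \<and> sp_le (S1,H1) (S2,H2))"
    using assms(2) by (rule bspec)
  hence "(\<exists>(S1,H1)\<in>A. H1 = K) \<longrightarrow> (\<exists>(S1,H1)\<in>A. H1 = K \<and> sp_le (S1,H1) (T,K))" using assms(3) by simp
  moreover have "\<exists>(S1,H1)\<in>A. H1 = K" using assms(4) by blast
  ultimately have "\<exists>(S1,H1)\<in>A. H1 = K \<and> sp_le (S1,H1) (T,K)" by blast
  then obtain p where "p\<in>A" "case p of (S1,H1) \<Rightarrow> H1 = K \<and> sp_le (S1,H1) (T,K)" by blast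
  thus ?thesis by (cases p) auto
qed

lemma spsI:
  assumes a1: "\<And>S H. (S,H)\<in>A \<Longrightarrow> \<exists>T K. (T,K)\<in>B \<and> sp_le (S,H) (T,K)"
  and a2: "\<And>T K S. (T,K)\<in>B \<Longrightarrow> K\<noteq>{} \<Longrightarrow> (S,K)\<in>A \<Longrightarrow> \<exists>S'. (S',K)\<in>A \<and> sp_le (S',K) (T,K)"
  shows "sps_le A B"
proof -
  have 1: "\<forall>p1\<in>A. \<exists>p2\<in>B. sp_le p1 p2"
  proof
    fix p assume "p \<in> A"
    moreover obtain S H where "p = (S,H)" by force
    ultimately obtain T K where "(T,K)\<in>B" "sp_le (S,H) (T,K)" using a1 by blast
    thus "\<exists>p2\<in>B. sp_le p p2" using \<open>p = (S,H)\<close> by auto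
  qed
  have 2: "\<forall>(S2,H2)\<in>B. H2 \<noteq> {} \<longrightarrow> (\<exists>(S1,H1)\<in>A. H1 = H2) \<longrightarrow> (\<exists>(S1,H1)\<in>A. H1 = H2 \<and> sp_le (S1,H1) (S2,H2))"
  proof
    fix p assume "p \<in> B"
    moreover obtain T K where p: "p = (T,K)" by force
    ultimately have tk: "(T,K)\<in>B" by simp
    have "K\<noteq>{} \<longrightarrow> (\<exists>(S1,H1)\<in>A. H1 = K) \<longrightarrow> (\<exists>(S1,H1)\<in>A. H1 = K \<and> sp_le (S1,H1) (T,K))"
    proof (intro impI)
      assume k: "K\<noteq>{}" "\<exists>(S,H)\<in>A. H=K"
      then obtain S where "(S,K)\<in>A" by auto
      then obtain S' where "(S',K)\<in>A" "sp_le (S',K) (T,K)" using a2[OF tk k(1)] by blast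
      thus "\<exists>(S1,H1)\<in>A. H1 = K \<and> sp_le (S1,H1) (T,K)" by auto
    qed
    thus "case p of (S2,H2) \<Rightarrow> H2 \<noteq> {} \<longrightarrow> (\<exists>(S1,H1)\<in>A. H1 = H2) \<longrightarrow> (\<exists>(S1,H1)\<in>A. H1 = H2 \<and> sp_le (S1,H1) (S2,H2))"
      using p by simp
  qed
  show ?thesis unfolding sps_le_def using 1 2 by blast
qed

lemma sps_le_iff: assumes A: "ps X A" and B: "ps X B" shows "sps_le A B \<longleftrightarrow> psle A B"
proof
  assume le: "sps_le A B"
  show "psle A B"
  proof (rule psleI)
    fix S H assume sh: "(S,H)\<in>A"
    then obtain T K where tk: "(T,K)\<in>B" "sp_le (S,H) (T,K)" using spsD1[OF le] by blast
    have sp: "(S,H) = (T,K) \<or> S \<union> H \<subseteq> T \<or> S \<union> H \<subseteq> K \<or> (S \<subset> T \<and> H = K \<and> K \<noteq> {})"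
      using tk(2) unfolding sp_le_simp .
    show "\<exists>T K. (T,K)\<in>B \<and> S \<subseteq> T \<and> (H \<subseteq> T \<or> K = H)"
    proof (cases "S \<union> H \<subseteq> K")
      case True
      have "S \<noteq> {}" using ps_sub[OF A sh] by blast
      hence "K \<noteq> {}" using True by blast
      hence "(K,{})\<in>B" using ps_pole[OF B tk(1)] by blast
      moreover have "S \<subseteq> K" "H \<subseteq> K" using True by auto
      ultimately show ?thesis by blast
    next
      case False
      hence "S \<subseteq> T \<and> (H \<subseteq> T \<or> K = H)" using sp by auto
      thus ?thesis using tk(1) by blast
    qed
  next
    fix T K S assume tk: "(T,K)\<in>B" "K \<noteq> {}" "(S,K)\<in>A"
    then obtain S' where s: "(S',K)\<in>A" "sp_le (S',K) (T,K)" using spsD2[OF le] by blast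
    have "S' \<noteq> {}" "S' \<inter> K = {}" using ps_sub[OF A s(1)] by auto
    hence "S' \<subseteq> T" using s(2) unfolding sp_le_simp by auto
    thus "\<exists>S'. (S',K)\<in>A \<and> S' \<subseteq> T" using s by blast
  qed
next
  assume le: "psle A B"
  show "sps_le A B"
  proof (rule spsI)
    fix S H assume sh: "(S,H)\<in>A"
    then obtain T K where tk: "(T,K)\<in>B" "S \<subseteq> T" "H \<subseteq> T \<or> K = H" using psleD1[OF le] by blast
    have "sp_le (S,H) (T,K)" unfolding sp_le_simp using tk by auto
    thus "\<exists>T K. (T,K)\<in>B \<and> sp_le (S,H) (T,K)" using tk by blast
  next
    fix T K S assume tk: "(T,K)\<in>B" "K \<noteq> {}" "(S,K)\<in>A"
    then obtain S1 where s1: "(S1,K)\<in>A" "S1 \<subseteq> T" using psleD2[OF le] by blast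
    have "sp_le (S1,K) (T,K)" using s1 tk unfolding sp_le_simp by auto
    thus "\<exists>S'. (S',K)\<in>A \<and> sp_le (S',K) (T,K)" using s1 by blast
  qed
qed



lemma psle_refl: "psle A A"
  by (rule psleI) blast+

lemma psle_antisym: assumes A: "ps X A" and B: "ps X B" and ab: "psle A B" and ba: "psle B A"
  shows "A = B"
proof -
  have sub: "A' \<subseteq> B'" if A': "ps X A'" and B': "ps X B'" and ab: "psle A' B'" and ba: "psle B' A'" for A' B'
  proof
    fix p assume pA: "p \<in> A'"
    obtain S H where p: "p = (S,H)" by force
    with pA have sh: "(S,H)\<in>A'" by simp
    obtain T K where tk: "(T,K)\<in>B'" "S\<subseteq>T" "H\<subseteq>T \<or> K=H" using psleD1[OF ab sh] by blast
    obtain S' H' where s': "(S',H')\<in>A'" "T\<subseteq>S'" "K\<subseteq>S' \<or> H'=K" using psleD1[OF ba tk(1)] by blast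
    have Sne: "S \<noteq> {}" "S \<inter> H = {}" using ps_sub[OF A' sh] by auto
    have "S \<inter> S' \<noteq> {}" using Sne tk(2) s'(2) by blast
    hence eq: "S' = S" "H' = H" using ps_disj[OF A' s'(1) sh] by auto
    hence T: "T = S" using tk(2) s'(2) by blast
    have Tk: "T \<inter> K = {}" using ps_sub[OF B' tk(1)] by auto
    have "K = {} \<or> K = H" using s'(3) eq T Tk by blast
    moreover have "H \<subseteq> T \<longrightarrow> H = {}" using T Sne by blast
    ultimately have "K = H" using tk(3) by blast
    thus "p \<in> B'" using tk(1) T p by simp
  qed
  show ?thesis using sub[OF A B ab ba] sub[OF B A ba ab] by blast
qed

lemma psle_trans: assumes A: "ps X A" and B: "ps X B" and C: "ps X C"
  and ab: "psle A B" and bc: "psle B C" shows "psle A C"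
proof (rule psleI)
  fix S H assume sh: "(S,H)\<in>A"
  obtain T K where tk: "(T,K)\<in>B" "S\<subseteq>T" "H\<subseteq>T \<or> K=H" using psleD1[OF ab sh] by blast
  obtain U L where ul: "(U,L)\<in>C" "T\<subseteq>U" "K\<subseteq>U \<or> L=K" using psleD1[OF bc tk(1)] by blast
  have "S \<subseteq> U \<and> (H \<subseteq> U \<or> L = H)" using tk(2,3) ul(2,3) by blast
  thus "\<exists>U L. (U,L)\<in>C \<and> S\<subseteq>U \<and> (H\<subseteq>U \<or> L=H)" using ul(1) by blast
next
  fix U L S assume ul: "(U,L)\<in>C" "L \<noteq> {}" "(S,L)\<in>A"
  obtain T K where tk: "(T,K)\<in>B" "S\<subseteq>T" "L\<subseteq>T \<or> K=L" using psleD1[OF ab ul(3)] by blast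
  show "\<exists>S'. (S',L)\<in>A \<and> S'\<subseteq>U"
  proof (cases "K = L")
    case True
    obtain T' where t': "(T',L)\<in>B" "T'\<subseteq>U" using psleD2[OF bc ul(1,2)] tk(1) True by blast
    obtain S' where "(S',L)\<in>A" "S'\<subseteq>T'" using psleD2[OF ab t'(1) ul(2,3)] by blast
    thus ?thesis using t'(2) by blast
  next
    case False
    hence LT: "L \<subseteq> T" using tk(3) by blast
    obtain U' L' where u': "(U',L')\<in>C" "T\<subseteq>U'" using psleD1[OF bc tk(1)] by blast
    have LC: "(L,{})\<in>C" using ps_pole[OF C ul(1,2)] .
    have "L \<inter> U' \<noteq> {}" using LT u'(2) ul(2) by blast
    hence "L = U'" using ps_disj[OF C LC u'(1)] by blast
    hence "S \<subseteq> L" using tk(2) u'(2) by blast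
    moreover have "S \<noteq> {}" "S \<inter> L = {}" using ps_sub[OF A ul(3)] by auto
    ultimately show ?thesis by blast
  qed
qed

definition pmin :: "'a set \<Rightarrow> 'a sps" where "pmin X = {({x}, {}) | x. x \<in> X}"
definition pmax :: "'a set \<Rightarrow> 'a sps" where "pmax X = {(X, {})}"

lemma pmin_ps: "ps X (pmin X)"
proof (rule ps_intro)
  show "\<And>S H. (S,H)\<in>pmin X \<Longrightarrow> S \<subseteq> X \<and> H \<subseteq> X \<and> S \<noteq> {} \<and> S\<inter>H={}" unfolding pmin_def by auto
  show "\<And>x. x\<in>X \<Longrightarrow> \<exists>S H. (S,H)\<in>pmin X \<and> x\<in>S" unfolding pmin_def by auto
  show "\<And>S H S' H'. (S,H)\<in>pmin X \<Longrightarrow> (S',H')\<in>pmin X \<Longrightarrow> S\<inter>S'\<noteq>{} \<Longrightarrow> S=S' \<and> H=H'" unfolding pmin_def by auto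
qed (auto simp: pmin_def)

lemma pmax_ps: "X \<noteq> {} \<Longrightarrow> ps X (pmax X)"
  by (rule ps_intro) (auto simp: pmax_def)

lemma pmin_le: assumes "ps X A" shows "psle (pmin X) A"
proof (rule psleI)
  fix S H assume "(S,H) \<in> pmin X"
  then obtain x where x: "S = {x}" "H = {}" "x \<in> X" unfolding pmin_def by auto
  obtain T K where "(T,K)\<in>A" "x \<in> T" using ps_cover[OF assms x(3)] by blast
  thus "\<exists>T K. (T,K)\<in>A \<and> S\<subseteq>T \<and> (H\<subseteq>T \<or> K=H)" using x by blast
next
  fix T K S assume "(S,K) \<in> pmin X" "K \<noteq> {}"
  thus "\<exists>S'. (S',K)\<in>pmin X \<and> S'\<subseteq>T" unfolding pmin_def by auto
qed

lemma le_pmax: assumes "ps X A" shows "psle A (pmax X)"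
proof (rule psleI)
  fix S H assume "(S,H) \<in> A"
  hence "S \<subseteq> X" "H \<subseteq> X" using ps_sub[OF assms] by auto
  moreover have "(X,{}) \<in> pmax X" unfolding pmax_def by simp
  ultimately show "\<exists>T K. (T,K)\<in>pmax X \<and> S\<subseteq>T \<and> (H\<subseteq>T \<or> K=H)" by blast
next
  fix T K S assume "(T,K) \<in> pmax X" "K \<noteq> {}"
  thus "\<exists>S'. (S',K)\<in>A \<and> S'\<subseteq>T" unfolding pmax_def by auto
qed

definition hh :: "'a set \<Rightarrow> 'a sps \<Rightarrow> nat" where
  "hh X A = card X - card (parts A) + card (holes A)"

lemma hh_pmin: "finite X \<Longrightarrow> hh X (pmin X) = 0"
proof -
  assume f: "finite X"
  have "parts (pmin X) = (\<lambda>x. {x}) ` X" unfolding parts_def pmin_def by auto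
  hence "card (parts (pmin X)) = card X" by (simp add: card_image)
  moreover have "holes (pmin X) = {}" unfolding holes_def pmin_def by auto
  ultimately show ?thesis unfolding hh_def by simp
qed

lemma hh_pmax: "hh X (pmax X) = card X - 1"
proof -
  have "parts (pmax X) = {X}" unfolding parts_def pmax_def by auto
  moreover have "holes (pmax X) = {}" unfolding holes_def pmax_def by auto
  ultimately show ?thesis unfolding hh_def by simp
qed



locale gpos =
  fixes P :: "'b set" and le :: "'b \<Rightarrow> 'b \<Rightarrow> bool" and h :: "'b \<Rightarrow> nat" and m M :: 'b
  assumes fin: "finite P" and po: "partial_order_on' P le"
  and mP: "m \<in> P" and MP: "M \<in> P" and minle: "\<And>a. a\<in>P \<Longrightarrow> le m a" and lemax: "\<And>a. a\<in>P \<Longrightarrow> le a M"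
  and hm: "h m = 0"
  and cover: "\<And>a b. a\<in>P \<Longrightarrow> b\<in>P \<Longrightarrow> le a b \<Longrightarrow> a\<noteq>b \<Longrightarrow> \<exists>c\<in>P. le a c \<and> le c b \<and> h c = Suc (h a)"
begin

lemma prefl: "a \<in> P \<Longrightarrow> le a a" using po unfolding partial_order_on'_def by blast
lemma pantisym: "a \<in> P \<Longrightarrow> b \<in> P \<Longrightarrow> le a b \<Longrightarrow> le b a \<Longrightarrow> a = b"
  using po unfolding partial_order_on'_def by blast
lemma ptrans: "a \<in> P \<Longrightarrow> b \<in> P \<Longrightarrow> c \<in> P \<Longrightarrow> le a b \<Longrightarrow> le b c \<Longrightarrow> le a c"
  using po unfolding partial_order_on'_def by blast

definition ival where "ival a b = {c\<in>P. le a c \<and> le c b}"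

lemma ival_sub: assumes "a\<in>P" "b\<in>P" "c\<in>P" "le a c" "le c b" "h c = Suc (h a)"
  shows "card (ival c b) < card (ival a b)"
proof (rule psubset_card_mono)
  show "finite (ival a b)" using fin unfolding ival_def by simp
  have "ival c b \<subseteq> ival a b"
  proof
    fix x assume "x \<in> ival c b"
    hence x: "x \<in> P" "le c x" "le x b" unfolding ival_def by auto
    hence "le a x" using ptrans[OF assms(1) assms(3) x(1) assms(4) x(2)] by simp
    thus "x \<in> ival a b" using x unfolding ival_def by simp
  qed
  moreover have "a \<in> ival a b" unfolding ival_def
    using assms(1) prefl[OF assms(1)] ptrans[OF assms(1) assms(3) assms(2) assms(4) assms(5)] by simp
  moreover have "a \<notin> ival c b"
  proof
    assume "a \<in> ival c b"
    hence "le c a" unfolding ival_def by simp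
    hence "c = a" using pantisym[OF assms(3) assms(1)] assms(4) by simp
    thus False using assms(6) by simp
  qed
  ultimately show "ival c b \<subset> ival a b" by blast
qed

lemma mono_strict: "a\<in>P \<Longrightarrow> b\<in>P \<Longrightarrow> le a b \<Longrightarrow> a \<noteq> b \<Longrightarrow> h a < h b"
proof (induction "card (ival a b)" arbitrary: a rule: less_induct)
  case less
  obtain c where c: "c\<in>P" "le a c" "le c b" "h c = Suc (h a)" using cover less.prems by blast
  show ?case
  proof (cases "c = b")
    case True thus ?thesis using c by simp
  next
    case False
    have "card (ival c b) < card (ival a b)" using ival_sub c less.prems by blast
    hence "h c < h b" using less.hyps c less.prems False by blast
    thus ?thesis using c by simp
  qed
qed

lemma mono: "a\<in>P \<Longrightarrow> b\<in>P \<Longrightarrow> le a b \<Longrightarrow> h a \<le> h b"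
  using mono_strict by fastforce

lemma chain_up: "a\<in>P \<Longrightarrow> b\<in>P \<Longrightarrow> le a b \<Longrightarrow>
  \<exists>C. is_chain P le C \<and> a \<in> C \<and> (\<forall>x\<in>C. le a x \<and> le x b) \<and> card C = Suc (h b - h a)"
proof (induction "card (ival a b)" arbitrary: a rule: less_induct)
  case less
  show ?case
  proof (cases "a = b")
    case True
    have "is_chain P le {a}" unfolding is_chain_def using less.prems prefl by blast
    thus ?thesis using True less.prems prefl by auto
  next
    case False
    obtain c where c: "c\<in>P" "le a c" "le c b" "h c = Suc (h a)" using cover less.prems False by blast
    have "card (ival c b) < card (ival a b)" using ival_sub c less.prems by blast
    then obtain C where C: "is_chain P le C" "c \<in> C" "\<forall>x\<in>C. le c x \<and> le x b" "card C = Suc (h b - h c)"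
      using less.hyps c less.prems by blast
    have aC: "a \<notin> C"
    proof
      assume "a \<in> C" hence "le c a" using C by blast
      hence "c = a" using pantisym c less.prems by blast
      thus False using c by simp
    qed
    have CP: "C \<subseteq> P" using C unfolding is_chain_def by blast
    have ax: "\<forall>x\<in>C. le a x \<and> le x b" using C c ptrans CP less.prems by blast
    have "is_chain P le (insert a C)" using C less.prems ax CP unfolding is_chain_def
      by (auto intro: prefl)
    moreover have "finite C" using CP fin finite_subset by blast
    moreover have "h c \<le> h b" using mono c less.prems by blast
    ultimately show ?thesis using aC C ax less.prems prefl c
      by (intro exI[of _ "insert a C"]) auto
  qed
qed

lemma chain_bound: assumes "is_chain P le C" "a \<in> P" "\<forall>c\<in>C. le c a"
  shows "card C \<le> Suc (h a)"
proof -
  have CP: "C \<subseteq> P" using assms unfolding is_chain_def by blast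
  have inj: "inj_on h C"
  proof
    fix x y assume xy: "x\<in>C" "y\<in>C" "h x = h y"
    show "x = y"
    proof (rule ccontr)
      assume "x \<noteq> y"
      moreover have "le x y \<or> le y x" using assms(1) xy unfolding is_chain_def by blast
      ultimately show False using mono_strict xy CP by fastforce
    qed
  qed
  have "h ` C \<subseteq> {..h a}" using mono assms CP by fastforce
  hence "card (h ` C) \<le> Suc (h a)" by (metis card_atMost card_mono finite_atMost)
  thus ?thesis using card_image[OF inj] by simp
qed

lemma height_eq: assumes "a \<in> P" shows "height P le a = h a"
proof -
  let ?S = "{chain_length C | C. is_chain P le C \<and> (\<forall>c\<in>C. le c a)}"
  obtain C where C: "is_chain P le C" "m \<in> C" "\<forall>x\<in>C. le m x \<and> le x a" "card C = Suc (h a - h m)"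
    using chain_up[OF mP assms minle[OF assms]] by blast
  have "h a \<in> ?S" using C hm unfolding chain_length_def by force
  moreover have "\<forall>x\<in>?S. x \<le> h a"
  proof
    fix x assume "x \<in> ?S"
    then obtain D where "x = chain_length D" "is_chain P le D" "\<forall>c\<in>D. le c a" by blast
    thus "x \<le> h a" using chain_bound[OF _ assms] unfolding chain_length_def by fastforce
  qed
  moreover have "finite ?S"
  proof (rule finite_subset)
    show "?S \<subseteq> {..h a}" using calculation(2) by auto
  qed simp
  ultimately show ?thesis unfolding height_def by (meson Max_eqI)
qed

lemma maxchain_card: assumes mc: "maximal_chain P le C" shows "card C = Suc (h M)"
proof -
  have ch: "is_chain P le C" using mc unfolding maximal_chain_def by blast
  have CP: "C \<subseteq> P" using ch unfolding is_chain_def by blast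
  have finC: "finite C" using CP fin finite_subset by blast
  have MC: "M \<in> C"
  proof -
    have "is_chain P le (insert M C)" using ch MP lemax CP unfolding is_chain_def by blast
    hence "insert M C = C" using mc unfolding maximal_chain_def by blast
    thus ?thesis by blast
  qed
  have mC: "m \<in> C"
  proof -
    have "is_chain P le (insert m C)" using ch mP minle CP unfolding is_chain_def by blast
    hence "insert m C = C" using mc unfolding maximal_chain_def by blast
    thus ?thesis by blast
  qed
  have le1: "card C \<le> Suc (h M)" using chain_bound[OF ch MP] lemax CP by blast
  have "{..h M} \<subseteq> h ` C"
  proof
    fix k assume k: "k \<in> {..h M}"
    show "k \<in> h ` C"
    proof (rule ccontr)
      assume nk: "k \<notin> h ` C"
      have k0: "0 < k" using nk mC hm by (metis gr0I image_eqI)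
      let ?L = "{d\<in>C. h d < k}"
      have Lne: "m \<in> ?L" using mC hm k0 by simp
      have finL: "finite (h ` ?L)" using finC by simp
      have "Max (h ` ?L) \<in> h ` ?L" using finL Lne by (intro Max_in) auto
      then obtain a where a: "a \<in> ?L" "h a = Max (h ` ?L)" by auto
      have amax: "\<And>d. d \<in> C \<Longrightarrow> h d < k \<Longrightarrow> h d \<le> h a" using a finL by auto
      let ?G = "{d\<in>C. k < h d}"
      have Gne: "M \<in> ?G" using MC nk k by (metis atMost_iff image_eqI le_neq_implies_less mem_Collect_eq)
      have finG: "finite (h ` ?G)" using finC by simp
      have "Min (h ` ?G) \<in> h ` ?G" using finG Gne by (intro Min_in) auto
      then obtain b where b: "b \<in> ?G" "h b = Min (h ` ?G)" by auto
      have bmin: "\<And>d. d \<in> C \<Longrightarrow> k < h d \<Longrightarrow> h b \<le> h d" using b finG by auto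
      have aP: "a \<in> P" "b \<in> P" using a b CP by auto
      have hab: "h a < h b" using a b by simp
      have ab: "le a b"
      proof -
        have "le a b \<or> le b a" using ch a b unfolding is_chain_def by blast
        moreover have "\<not> le b a" using mono aP hab by fastforce
        ultimately show ?thesis by blast
      qed
      obtain c where c: "c\<in>P" "le a c" "le c b" "h c = Suc (h a)"
        using cover[OF aP ab] hab by blast
      have cC: "c \<notin> C"
      proof
        assume "c \<in> C"
        moreover have "h c \<noteq> k" using nk \<open>c\<in>C\<close> by blast
        moreover have "h c \<le> k" using c a by simp
        ultimately have "h c \<le> h a" using amax by simp
        thus False using c by simp
      qed
      have "is_chain P le (insert c C)" unfolding is_chain_def
      proof (intro conjI ballI)
        show "insert c C \<noteq> {}" by simp
        show "insert c C \<subseteq> P" using CP c by blast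
        fix x y assume xy: "x \<in> insert c C" "y \<in> insert c C"
        have comp: "le d c \<or> le c d" if d: "d \<in> C" for d
        proof -
          have dP: "d \<in> P" using d CP by blast
          have "h d \<noteq> k" using nk d by blast
          hence "h d < k \<or> k < h d" by arith
          thus ?thesis
          proof
            assume "h d < k"
            hence hd: "h d \<le> h a" using amax d by blast
            have "le d a \<or> le a d" using ch d a unfolding is_chain_def by blast
            thus ?thesis
            proof
              assume "le d a" thus ?thesis using ptrans dP aP c by blast
            next
              assume ad: "le a d"
              have "d = a" using mono_strict[OF aP(1) dP ad] hd by fastforce
              thus ?thesis using c by simp
            qed
          next
            assume "k < h d"
            hence hd: "h b \<le> h d" using bmin d by blast
            have "le d b \<or> le b d" using ch d b unfolding is_chain_def by blast
            thus ?thesis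
            proof
              assume "le b d" thus ?thesis using ptrans dP aP c by blast
            next
              assume db: "le d b"
              have "d = b" using mono_strict[OF dP aP(2) db] hd by fastforce
              thus ?thesis using c by simp
            qed
          qed
        qed
        show "le x y \<or> le y x"
        proof (cases "x = c")
          case True
          thus ?thesis using xy comp prefl c by blast
        next
          case False
          hence xC: "x \<in> C" using xy by blast
          show ?thesis
          proof (cases "y = c")
            case True thus ?thesis using comp xC by blast
          next
            case False
            hence "y \<in> C" using xy by blast
            thus ?thesis using ch xC unfolding is_chain_def by blast
          qed
        qed
      qed
      hence "insert c C = C" using mc unfolding maximal_chain_def by blast
      thus False using cC by blast
    qed
  qed
  hence "card {..h M} \<le> card (h ` C)" using finC by (intro card_mono) auto
  also have "\<dots> \<le> card C" using finC by (rule card_image_le)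
  finally show ?thesis using le1 by simp
qed

lemma graded: "graded P le"
  unfolding graded_def chain_length_def using maxchain_card by simp

lemma bounded: "bounded_poset P le"
  unfolding bounded_poset_def is_min_def is_max_def using po mP MP minle lemax by blast

end



context
  fixes X :: "'a set" and A :: "'a sps" and P Q :: "'a set"
  assumes A: "ps X A" and Pin: "(P,{})\<in>A" and Qin: "(Q,{})\<in>A" and PQ: "P \<noteq> Q"
  and nP: "\<And>S. (S,P)\<notin>A" and nQ: "\<And>S. (S,Q)\<notin>A"
begin

definition "Ca = insert (P\<union>Q,{}) (A - {(P,{}),(Q,{})})"

lemma memCa: "(S,H) \<in> Ca \<longleftrightarrow> (S = P\<union>Q \<and> H = {}) \<or> ((S,H)\<in>A \<and> S \<noteq> P \<and> S \<noteq> Q)"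
proof -
  have "(P,H)\<in>A \<Longrightarrow> H = {}" for H using ps_disj[OF A _ Pin] ps_sub[OF A Pin] by blast
  moreover have "(Q,H)\<in>A \<Longrightarrow> H = {}" for H using ps_disj[OF A _ Qin] ps_sub[OF A Qin] by blast
  ultimately show ?thesis unfolding Ca_def by auto
qed

lemma a_facts: "P \<noteq> {}" "Q \<noteq> {}" "P \<inter> Q = {}" "P \<subseteq> X" "Q \<subseteq> X"
  using ps_sub[OF A Pin] ps_sub[OF A Qin] ps_disj[OF A Pin Qin] PQ by auto

lemma a_old: "(S,H)\<in>A \<Longrightarrow> S \<inter> (P \<union> Q) \<noteq> {} \<Longrightarrow> S = P \<or> S = Q"
  using ps_disj[OF A _ Pin] ps_disj[OF A _ Qin] by blast

lemma memCaE: assumes "(S,H) \<in> Ca"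
  obtains "S = P\<union>Q" "H = {}" | "(S,H)\<in>A" "S \<noteq> P" "S \<noteq> Q"
  using assms memCa by blast

lemma Ca_ps: "ps X Ca"
proof (rule ps_intro)
  fix S H assume "(S,H)\<in>Ca"
  thus "S \<subseteq> X \<and> H \<subseteq> X \<and> S \<noteq> {} \<and> S\<inter>H={}"
  proof (cases rule: memCaE)
    case 1 thus ?thesis using a_facts by auto
  next
    case 2 thus ?thesis using ps_sub[OF A] by simp
  qed
next
  fix x assume "x\<in>X"
  then obtain S H where sh: "(S,H)\<in>A" "x\<in>S" using ps_cover[OF A] by blast
  show "\<exists>S H. (S,H)\<in>Ca \<and> x\<in>S"
  proof (cases "S = P \<or> S = Q")
    case True
    hence "(P\<union>Q,{}) \<in> Ca" "x \<in> P \<union> Q" using memCa sh by auto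
    thus ?thesis by blast
  next
    case False
    hence "(S,H) \<in> Ca" using memCa sh by auto
    thus ?thesis using sh by blast
  qed
next
  fix S H S' H' assume a: "(S,H)\<in>Ca" "(S',H')\<in>Ca" "S\<inter>S'\<noteq>{}"
  from a(1) show "S=S' \<and> H=H'"
  proof (cases rule: memCaE)
    case 1
    from a(2) show ?thesis
    proof (cases rule: memCaE)
      case 1 thus ?thesis using \<open>S = P\<union>Q\<close> \<open>H = {}\<close> by simp
    next
      case 2
      have "S' = P \<or> S' = Q" using a_old[OF 2(1)] a(3) \<open>S = P\<union>Q\<close> by auto
      thus ?thesis using 2 by simp
    qed
  next
    case 2
    from a(2) show ?thesis
    proof (cases rule: memCaE)
      case 1
      have "S = P \<or> S = Q" using a_old[OF \<open>(S,H)\<in>A\<close>] a(3) \<open>S' = P\<union>Q\<close> by auto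
      thus ?thesis using 2 by simp
    next
      case 2
      show ?thesis using ps_disj[OF A \<open>(S,H)\<in>A\<close> 2(1) a(3)] .
    qed
  qed
next
  fix S H assume a: "(S,H)\<in>Ca" "H\<noteq>{}"
  hence s: "(S,H)\<in>A" using memCa by auto
  have "(H,{})\<in>A" using ps_pole[OF A s a(2)] .
  moreover have "H \<noteq> P" "H \<noteq> Q" using nP nQ s by auto
  ultimately show "(H,{})\<in>Ca" using memCa by auto
next
  fix S H assume a: "(S,H)\<in>Ca" "H\<noteq>{}"
  hence s: "(S,H)\<in>A" using memCa by auto
  obtain S' where s': "S'\<noteq>S" "(S',H)\<in>A" using ps_two[OF A s a(2)] by blast
  have "S' \<noteq> P" using ps_disj[OF A s'(2) Pin] a(2) a_facts by auto
  moreover have "S' \<noteq> Q" using ps_disj[OF A s'(2) Qin] a(2) a_facts by auto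
  ultimately have "(S',H)\<in>Ca" using memCa s' by auto
  thus "\<exists>S'. S'\<noteq>S \<and> (S',H)\<in>Ca" using s' by blast
next
  fix S1 S2 S3 H assume "(S1,H)\<in>Ca" "(S2,H)\<in>Ca" "(S3,H)\<in>Ca" "H\<noteq>{}"
  hence "(S1,H)\<in>A" "(S2,H)\<in>A" "(S3,H)\<in>A" using memCa by auto
  thus "S1=S2 \<or> S1=S3 \<or> S2=S3" using ps_three[OF A] \<open>H\<noteq>{}\<close> by blast
qed

lemma A_le_Ca: "psle A Ca"
proof (rule psleI)
  fix S H assume s: "(S,H)\<in>A"
  show "\<exists>T K. (T,K)\<in>Ca \<and> S\<subseteq>T \<and> (H\<subseteq>T \<or> K=H)"
  proof (cases "S = P \<or> S = Q")
    case True
    hence "H = {}" using ps_disj[OF A s Pin] ps_disj[OF A s Qin] a_facts by blast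
    thus ?thesis using True memCa by blast
  next
    case False thus ?thesis using s memCa by blast
  qed
next
  fix T K S assume "(T,K)\<in>Ca" "K\<noteq>{}"
  hence "(T,K)\<in>A" using memCa by auto
  thus "\<exists>S'. (S',K)\<in>A \<and> S'\<subseteq>T" by blast
qed

lemma Ca_le: assumes B: "ps X B" and ab: "psle A B" and U: "(U,KU)\<in>B" "P \<subseteq> U" "Q \<subseteq> U"
  shows "psle Ca B"
proof (rule psleI)
  fix S H assume s: "(S,H)\<in>Ca"
  thus "\<exists>T K. (T,K)\<in>B \<and> S\<subseteq>T \<and> (H\<subseteq>T \<or> K=H)"
  proof (cases rule: memCaE)
    case 1
    hence "S \<subseteq> U" "H \<subseteq> U" using U by auto
    thus ?thesis using U(1) by blast
  next
    case 2 thus ?thesis using psleD1[OF ab 2(1)] by simp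
  qed
next
  fix T K S assume a: "(T,K)\<in>B" "K\<noteq>{}" "(S,K)\<in>Ca"
  hence "(S,K)\<in>A" using memCa by auto
  then obtain S' where s': "(S',K)\<in>A" "S'\<subseteq>T" using psleD2[OF ab a(1,2)] by blast
  have "S' \<noteq> P" using ps_disj[OF A s'(1) Pin] a(2) a_facts by auto
  moreover have "S' \<noteq> Q" using ps_disj[OF A s'(1) Qin] a(2) a_facts by auto
  ultimately have "(S',K)\<in>Ca" using s' memCa by auto
  thus "\<exists>S'. (S',K)\<in>Ca \<and> S'\<subseteq>T" using s' by blast
qed

lemma parts_Ca: "parts Ca = insert (P \<union> Q) (parts A - {P,Q})"
proof
  show "parts Ca \<subseteq> insert (P \<union> Q) (parts A - {P,Q})"
  proof
    fix S assume "S \<in> parts Ca"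
    then obtain H where "(S,H)\<in>Ca" unfolding parts_def by auto
    thus "S \<in> insert (P \<union> Q) (parts A - {P,Q})"
      by (cases rule: memCaE) (auto simp: parts_def)
  qed
  show "insert (P \<union> Q) (parts A - {P,Q}) \<subseteq> parts Ca"
  proof
    fix S assume S: "S \<in> insert (P \<union> Q) (parts A - {P,Q})"
    show "S \<in> parts Ca"
    proof (cases "S = P \<union> Q")
      case True
      hence "(S,{})\<in>Ca" using memCa by auto
      thus ?thesis unfolding parts_def by auto
    next
      case False
      then obtain H where "(S,H)\<in>A" "S \<noteq> P" "S \<noteq> Q" using S unfolding parts_def by auto
      hence "(S,H)\<in>Ca" using memCa by auto
      thus ?thesis unfolding parts_def by auto
    qed
  qed
qed

lemma holes_Ca: "holes Ca = holes A"
proof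
  show "holes Ca \<subseteq> holes A"
  proof
    fix H assume "H \<in> holes Ca"
    then obtain S where "(S,H)\<in>Ca" "H \<noteq> {}" unfolding holes_def by auto
    hence "(S,H)\<in>A" using memCa by auto
    thus "H \<in> holes A" using \<open>H\<noteq>{}\<close> unfolding holes_def by auto
  qed
  show "holes A \<subseteq> holes Ca"
  proof
    fix H assume "H \<in> holes A"
    then obtain S where s: "(S,H)\<in>A" "H \<noteq> {}" unfolding holes_def by auto
    have "S \<noteq> P" using ps_disj[OF A s(1) Pin] s(2) a_facts by auto
    moreover have "S \<noteq> Q" using ps_disj[OF A s(1) Qin] s(2) a_facts by auto
    ultimately have "(S,H)\<in>Ca" using memCa s by auto
    thus "H \<in> holes Ca" using s unfolding holes_def by auto
  qed
qed

end



context
  fixes X :: "'a set" and A :: "'a sps" and P Q H :: "'a set"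
  assumes A: "ps X A" and Pin: "(P,H)\<in>A" and Hne: "H \<noteq> {}" and Qin: "(Q,{})\<in>A"
  and nQ: "\<And>S. (S,Q)\<notin>A"
begin

definition "Cb = insert (P\<union>Q,H) (A - {(P,H),(Q,{})})"

lemma Hin: "(H,{})\<in>A" using ps_pole[OF A Pin Hne] .

lemma b_facts: "P \<noteq> {}" "Q \<noteq> {}" "P \<subseteq> X" "Q \<subseteq> X" "H \<subseteq> X" "P \<inter> H = {}"
  using ps_sub[OF A Pin] ps_sub[OF A Qin] by auto

lemma PQ: "P \<noteq> Q" using ps_disj[OF A Pin Qin] b_facts Hne by auto

lemma PQd: "P \<inter> Q = {}" using ps_disj[OF A Pin Qin] PQ by auto

lemma QH: "Q \<inter> H = {}"
proof (rule ccontr)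
  assume "Q \<inter> H \<noteq> {}"
  hence "Q = H" using ps_disj[OF A Qin Hin] by auto
  thus False using nQ Pin by auto
qed

lemma nP: "(S,P)\<notin>A"
proof
  assume "(S,P)\<in>A"
  hence "(P,{})\<in>A" using ps_pole[OF A] b_facts by auto
  thus False using ps_disj[OF A Pin] b_facts Hne by auto
qed

lemma firstP: "(P,K)\<in>A \<Longrightarrow> K = H" using ps_disj[OF A _ Pin] b_facts by auto
lemma firstQ: "(Q,K)\<in>A \<Longrightarrow> K = {}" using ps_disj[OF A _ Qin] b_facts by auto

lemma memCb: "(S,K) \<in> Cb \<longleftrightarrow> (S = P\<union>Q \<and> K = H) \<or> ((S,K)\<in>A \<and> S \<noteq> P \<and> S \<noteq> Q)"
  unfolding Cb_def using firstP firstQ by auto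

lemma memCbE: assumes "(S,K) \<in> Cb"
  obtains "S = P\<union>Q" "K = H" | "(S,K)\<in>A" "S \<noteq> P" "S \<noteq> Q"
  using assms memCb by blast

lemma b_old: "(S,K)\<in>A \<Longrightarrow> S \<inter> (P \<union> Q) \<noteq> {} \<Longrightarrow> S = P \<or> S = Q"
proof -
  assume s: "(S,K)\<in>A" "S \<inter> (P \<union> Q) \<noteq> {}"
  hence "S \<inter> P \<noteq> {} \<or> S \<inter> Q \<noteq> {}" by auto
  thus "S = P \<or> S = Q" using ps_disj[OF A s(1) Pin] ps_disj[OF A s(1) Qin] by auto
qed

lemma b_old2: "(S,K)\<in>A \<Longrightarrow> S \<noteq> P \<Longrightarrow> S \<noteq> Q \<Longrightarrow> S \<noteq> P \<union> Q"
  using b_old b_facts by auto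

lemma Cb_ps: "ps X Cb"
proof (rule ps_intro)
  fix S K assume "(S,K)\<in>Cb"
  thus "S \<subseteq> X \<and> K \<subseteq> X \<and> S \<noteq> {} \<and> S\<inter>K={}"
  proof (cases rule: memCbE)
    case 1 thus ?thesis using b_facts QH by auto
  next
    case 2 thus ?thesis using ps_sub[OF A] by simp
  qed
next
  fix x assume "x\<in>X"
  then obtain S K where sh: "(S,K)\<in>A" "x\<in>S" using ps_cover[OF A] by blast
  show "\<exists>S K. (S,K)\<in>Cb \<and> x\<in>S"
  proof (cases "S = P \<or> S = Q")
    case True
    hence "(P\<union>Q,H) \<in> Cb" "x \<in> P \<union> Q" using memCb sh by auto
    thus ?thesis by blast
  next
    case False
    hence "(S,K) \<in> Cb" using memCb sh by auto
    thus ?thesis using sh by blast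
  qed
next
  fix S K S' K' assume a: "(S,K)\<in>Cb" "(S',K')\<in>Cb" "S\<inter>S'\<noteq>{}"
  from a(1) show "S=S' \<and> K=K'"
  proof (cases rule: memCbE)
    case 1
    from a(2) show ?thesis
    proof (cases rule: memCbE)
      case 1 thus ?thesis using \<open>S = P\<union>Q\<close> \<open>K = H\<close> by simp
    next
      case 2
      have "S' = P \<or> S' = Q" using b_old[OF 2(1)] a(3) \<open>S = P\<union>Q\<close> by auto
      thus ?thesis using 2 by simp
    qed
  next
    case 2
    from a(2) show ?thesis
    proof (cases rule: memCbE)
      case 1
      have "S = P \<or> S = Q" using b_old[OF \<open>(S,K)\<in>A\<close>] a(3) \<open>S' = P\<union>Q\<close> by auto
      thus ?thesis using 2 by simp
    next
      case 2
      show ?thesis using ps_disj[OF A \<open>(S,K)\<in>A\<close> 2(1) a(3)] .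
    qed
  qed
next
  fix S K assume a: "(S,K)\<in>Cb" "K\<noteq>{}"
  from a(1) show "(K,{})\<in>Cb"
  proof (cases rule: memCbE)
    case 1
    have "H \<noteq> P" "H \<noteq> Q" using b_facts Hne QH by auto
    thus ?thesis using Hin memCb 1 by auto
  next
    case 2
    have "(K,{})\<in>A" using ps_pole[OF A 2(1) a(2)] .
    moreover have "K \<noteq> P" "K \<noteq> Q" using nP nQ 2(1) by auto
    ultimately show ?thesis using memCb by auto
  qed
next
  fix S K assume a: "(S,K)\<in>Cb" "K\<noteq>{}"
  from a(1) show "\<exists>S'. S'\<noteq>S \<and> (S',K)\<in>Cb"
  proof (cases rule: memCbE)
    case 1
    obtain S' where s': "S'\<noteq>P" "(S',H)\<in>A" using ps_two[OF A Pin Hne] by blast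
    have "S' \<noteq> Q" using firstQ s' Hne by auto
    hence "(S',H)\<in>Cb" "S' \<noteq> P \<union> Q" using s' memCb b_old2 by auto
    thus ?thesis using 1 by auto
  next
    case 2
    obtain S' where s': "S'\<noteq>S" "(S',K)\<in>A" using ps_two[OF A 2(1) a(2)] by blast
    show ?thesis
    proof (cases "S' = P")
      case True
      hence "K = H" using firstP s' by simp
      hence "(P\<union>Q,K)\<in>Cb" using memCb by simp
      moreover have "P \<union> Q \<noteq> S" using b_old2[OF 2(1,2,3)] by auto
      ultimately show ?thesis by (intro exI[of _ "P\<union>Q"]) simp
    next
      case False
      have "S' \<noteq> Q" using firstQ s' a(2) by auto
      hence "(S',K)\<in>Cb" using memCb s' False by auto
      thus ?thesis using s' by blast
    qed
  qed
next
  fix S1 S2 S3 K assume a: "(S1,K)\<in>Cb" "(S2,K)\<in>Cb" "(S3,K)\<in>Cb" "K\<noteq>{}"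
  define g where "g S = (if S = P \<union> Q then P else S)" for S
  have gA: "(g S, K) \<in> A \<and> (g S = P \<longleftrightarrow> S = P \<union> Q)" if s: "(S,K)\<in>Cb" for S
    using s
  proof (cases rule: memCbE)
    case 1 thus ?thesis using Pin g_def by simp
  next
    case 2 thus ?thesis using b_old2[OF 2] g_def by auto
  qed
  have ginj: "g S = g S' \<Longrightarrow> (S,K)\<in>Cb \<Longrightarrow> (S',K)\<in>Cb \<Longrightarrow> S = S'" for S S'
    using gA unfolding g_def by metis
  have "g S1 = g S2 \<or> g S1 = g S3 \<or> g S2 = g S3"
    using ps_three[OF A] gA a by blast
  thus "S1=S2 \<or> S1=S3 \<or> S2=S3" using ginj a by blast
qed

lemma A_le_Cb: "psle A Cb"
proof (rule psleI)
  fix S K assume s: "(S,K)\<in>A"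
  show "\<exists>T K'. (T,K')\<in>Cb \<and> S\<subseteq>T \<and> (K\<subseteq>T \<or> K'=K)"
  proof (cases "S = P")
    case True
    hence "K = H" using firstP s by simp
    moreover have "(P\<union>Q,H)\<in>Cb" using memCb by simp
    ultimately show ?thesis using True by blast
  next
    case False
    show ?thesis
    proof (cases "S = Q")
      case True
      hence "K = {}" using firstQ s by simp
      moreover have "(P\<union>Q,H)\<in>Cb" using memCb by simp
      ultimately show ?thesis using True by blast
    next
      case False
      hence "(S,K)\<in>Cb" using memCb s \<open>S\<noteq>P\<close> by simp
      thus ?thesis by blast
    qed
  qed
next
  fix T K S assume a: "(T,K)\<in>Cb" "K\<noteq>{}"
  from a(1) show "\<exists>S'. (S',K)\<in>A \<and> S'\<subseteq>T"
  proof (cases rule: memCbE)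
    case 1 thus ?thesis using Pin by blast
  next
    case 2 thus ?thesis by blast
  qed
qed

lemma Cb_le: assumes B: "ps X B" and ab: "psle A B" and U: "(U,KU)\<in>B" "P \<subseteq> U" "Q \<subseteq> U"
  shows "psle Cb B"
proof (rule psleI)
  fix S K assume s: "(S,K)\<in>Cb"
  thus "\<exists>T K'. (T,K')\<in>B \<and> S\<subseteq>T \<and> (K\<subseteq>T \<or> K'=K)"
  proof (cases rule: memCbE)
    case 1
    obtain T K' where t: "(T,K')\<in>B" "P\<subseteq>T" "H\<subseteq>T \<or> K'=H" using psleD1[OF ab Pin] by blast
    have "T \<inter> U \<noteq> {}" using t(2) U(2) b_facts by auto
    hence "T = U" using ps_disj[OF B t(1) U(1)] by simp
    hence "S \<subseteq> T" "K \<subseteq> T \<or> K' = K" using 1 U t by auto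
    thus ?thesis using t(1) by blast
  next
    case 2 thus ?thesis using psleD1[OF ab 2(1)] by simp
  qed
next
  fix T K S assume a: "(T,K)\<in>B" "K\<noteq>{}" "(S,K)\<in>Cb"
  have "\<exists>S0. (S0,K)\<in>A" using a(3)
  proof (cases rule: memCbE)
    case 1 thus ?thesis using Pin by blast
  next
    case 2 thus ?thesis by blast
  qed
  then obtain S0 where "(S0,K)\<in>A" by blast
  then obtain S' where s': "(S',K)\<in>A" "S'\<subseteq>T" using psleD2[OF ab a(1,2)] by blast
  show "\<exists>S'. (S',K)\<in>Cb \<and> S'\<subseteq>T"
  proof (cases "S' = P")
    case True
    hence "K = H" using firstP s' by simp
    have "T \<inter> U \<noteq> {}" using s'(2) True U(2) b_facts by auto
    hence "T = U" using ps_disj[OF B a(1) U(1)] by simp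
    hence "P \<union> Q \<subseteq> T" using U by auto
    moreover have "(P\<union>Q,K)\<in>Cb" using memCb \<open>K = H\<close> by simp
    ultimately show ?thesis by blast
  next
    case False
    have "S' \<noteq> Q" using firstQ s' a(2) by auto
    hence "(S',K)\<in>Cb" using memCb s' False by auto
    thus ?thesis using s' by blast
  qed
qed

lemma parts_Cb: "parts Cb = insert (P \<union> Q) (parts A - {P,Q})"
proof
  show "parts Cb \<subseteq> insert (P \<union> Q) (parts A - {P,Q})"
  proof
    fix S assume "S \<in> parts Cb"
    then obtain K where "(S,K)\<in>Cb" unfolding parts_def by auto
    thus "S \<in> insert (P \<union> Q) (parts A - {P,Q})"
      by (cases rule: memCbE) (auto simp: parts_def)
  qed
  show "insert (P \<union> Q) (parts A - {P,Q}) \<subseteq> parts Cb"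
  proof
    fix S assume S: "S \<in> insert (P \<union> Q) (parts A - {P,Q})"
    show "S \<in> parts Cb"
    proof (cases "S = P \<union> Q")
      case True
      hence "(S,H)\<in>Cb" using memCb by auto
      thus ?thesis unfolding parts_def by auto
    next
      case False
      then obtain K where "(S,K)\<in>A" "S \<noteq> P" "S \<noteq> Q" using S unfolding parts_def by auto
      hence "(S,K)\<in>Cb" using memCb by auto
      thus ?thesis unfolding parts_def by auto
    qed
  qed
qed

lemma holes_Cb: "holes Cb = holes A"
proof
  show "holes Cb \<subseteq> holes A"
  proof
    fix K assume "K \<in> holes Cb"
    then obtain S where s: "(S,K)\<in>Cb" "K \<noteq> {}" unfolding holes_def by auto
    have "\<exists>S0. (S0,K)\<in>A" using s(1)
    proof (cases rule: memCbE)
      case 1 thus ?thesis using Pin by blast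
    next
      case 2 thus ?thesis by blast
    qed
    thus "K \<in> holes A" using s(2) unfolding holes_def by auto
  qed
  show "holes A \<subseteq> holes Cb"
  proof
    fix K assume "K \<in> holes A"
    then obtain S where s: "(S,K)\<in>A" "K \<noteq> {}" unfolding holes_def by auto
    show "K \<in> holes Cb"
    proof (cases "S = P")
      case True
      hence "(P\<union>Q,K)\<in>Cb" using firstP s memCb by simp
      thus ?thesis using s unfolding holes_def by auto
    next
      case False
      have "S \<noteq> Q" using firstQ s by auto
      hence "(S,K)\<in>Cb" using memCb s False by auto
      thus ?thesis using s unfolding holes_def by auto
    qed
  qed
qed

end



context
  fixes X :: "'a set" and A :: "'a sps" and S1 S2 H :: "'a set"
  assumes A: "ps X A" and S1in: "(S1,H)\<in>A" and S2in: "(S2,H)\<in>A" and S12: "S1 \<noteq> S2" and Hne: "H \<noteq> {}"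
begin

definition "Cd = insert (S1\<union>S2\<union>H,{}) (A - {(S1,H),(S2,H),(H,{})})"

lemma Hin': "(H,{})\<in>A" using ps_pole[OF A S1in Hne] .

lemma d_facts: "S1 \<noteq> {}" "S2 \<noteq> {}" "S1 \<subseteq> X" "S2 \<subseteq> X" "H \<subseteq> X" "S1 \<inter> H = {}" "S2 \<inter> H = {}"
  using ps_sub[OF A S1in] ps_sub[OF A S2in] by auto

lemma S12d: "S1 \<inter> S2 = {}" using ps_disj[OF A S1in S2in] S12 by auto

lemma sats: "(S,H)\<in>A \<Longrightarrow> S = S1 \<or> S = S2"
  using ps_three[OF A S1in S2in _ Hne] S12 by blast

lemma first1: "(S1,K)\<in>A \<Longrightarrow> K = H" using ps_disj[OF A _ S1in] d_facts by auto
lemma first2: "(S2,K)\<in>A \<Longrightarrow> K = H" using ps_disj[OF A _ S2in] d_facts by auto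
lemma firstH: "(H,K)\<in>A \<Longrightarrow> K = {}" using ps_disj[OF A _ Hin'] Hne by auto

lemma nS1: "(S,S1)\<notin>A"
proof
  assume "(S,S1)\<in>A" hence "(S1,{})\<in>A" using ps_pole[OF A] d_facts by auto
  thus False using first1 Hne by auto
qed
lemma nS2: "(S,S2)\<notin>A"
proof
  assume "(S,S2)\<in>A" hence "(S2,{})\<in>A" using ps_pole[OF A] d_facts by auto
  thus False using first2 Hne by auto
qed

lemma S1H: "S1 \<noteq> H" using d_facts by auto
lemma S2H: "S2 \<noteq> H" using d_facts by auto

lemma memCd: "(S,K) \<in> Cd \<longleftrightarrow> (S = S1\<union>S2\<union>H \<and> K = {}) \<or> ((S,K)\<in>A \<and> S \<noteq> S1 \<and> S \<noteq> S2 \<and> S \<noteq> H)"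
  unfolding Cd_def using first1 first2 firstH by auto

lemma memCdE: assumes "(S,K) \<in> Cd"
  obtains "S = S1\<union>S2\<union>H" "K = {}" | "(S,K)\<in>A" "S \<noteq> S1" "S \<noteq> S2" "S \<noteq> H"
proof -
  have "(S = S1\<union>S2\<union>H \<and> K = {}) \<or> ((S,K)\<in>A \<and> S \<noteq> S1 \<and> S \<noteq> S2 \<and> S \<noteq> H)"
    using assms by (simp only: memCd)
  thus thesis using that by (elim disjE conjE) simp_all
qed

lemma d_old: "(S,K)\<in>A \<Longrightarrow> S \<inter> (S1\<union>S2\<union>H) \<noteq> {} \<Longrightarrow> S = S1 \<or> S = S2 \<or> S = H"
proof -
  assume s: "(S,K)\<in>A" "S \<inter> (S1\<union>S2\<union>H) \<noteq> {}"
  hence "S \<inter> S1 \<noteq> {} \<or> S \<inter> S2 \<noteq> {} \<or> S \<inter> H \<noteq> {}" by auto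
  thus ?thesis using ps_disj[OF A s(1) S1in] ps_disj[OF A s(1) S2in] ps_disj[OF A s(1) Hin'] by auto
qed

lemma oldK: "(S,K)\<in>A \<Longrightarrow> S \<noteq> S1 \<Longrightarrow> S \<noteq> S2 \<Longrightarrow> K \<noteq> H"
  using sats by auto

lemma Cd_ps: "ps X Cd"
proof (rule ps_intro)
  fix S K assume "(S,K)\<in>Cd"
  thus "S \<subseteq> X \<and> K \<subseteq> X \<and> S \<noteq> {} \<and> S\<inter>K={}"
  proof (cases rule: memCdE)
    case 1 thus ?thesis using d_facts by auto
  next
    case 2 thus ?thesis using ps_sub[OF A] by simp
  qed
next
  fix x assume "x\<in>X"
  then obtain S K where sh: "(S,K)\<in>A" "x\<in>S" using ps_cover[OF A] by blast
  show "\<exists>S K. (S,K)\<in>Cd \<and> x\<in>S"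
  proof (cases "S = S1 \<or> S = S2 \<or> S = H")
    case True
    hence "(S1\<union>S2\<union>H,{}) \<in> Cd" "x \<in> S1\<union>S2\<union>H" using memCd sh by auto
    thus ?thesis by blast
  next
    case False
    hence "(S,K) \<in> Cd" using memCd sh by auto
    thus ?thesis using sh by blast
  qed
next
  fix S K S' K' assume a: "(S,K)\<in>Cd" "(S',K')\<in>Cd" "S\<inter>S'\<noteq>{}"
  from a(1) show "S=S' \<and> K=K'"
  proof (cases rule: memCdE)
    case 1
    from a(2) show ?thesis
    proof (cases rule: memCdE)
      case 1 thus ?thesis using \<open>S = S1\<union>S2\<union>H\<close> \<open>K = {}\<close> by simp
    next
      case 2
      have "S' = S1 \<or> S' = S2 \<or> S' = H" using d_old[OF 2(1)] a(3) \<open>S = S1\<union>S2\<union>H\<close> by auto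
      thus ?thesis using 2 by simp
    qed
  next
    case 2
    from a(2) show ?thesis
    proof (cases rule: memCdE)
      case 1
      have "S = S1 \<or> S = S2 \<or> S = H" using d_old[OF \<open>(S,K)\<in>A\<close>] a(3) \<open>S' = S1\<union>S2\<union>H\<close> by auto
      thus ?thesis using 2 by simp
    next
      case 2
      show ?thesis using ps_disj[OF A \<open>(S,K)\<in>A\<close> 2(1) a(3)] .
    qed
  qed
next
  fix S K assume a: "(S,K)\<in>Cd" "K\<noteq>{}"
  hence s: "(S,K)\<in>A" "S \<noteq> S1" "S \<noteq> S2" "S \<noteq> H" using memCd by auto
  have "(K,{})\<in>A" using ps_pole[OF A s(1) a(2)] .
  moreover have "K \<noteq> S1" "K \<noteq> S2" using nS1 nS2 s(1) by auto
  moreover have "K \<noteq> H" using oldK s by auto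
  ultimately show "(K,{})\<in>Cd" using memCd by auto
next
  fix S K assume a: "(S,K)\<in>Cd" "K\<noteq>{}"
  hence s: "(S,K)\<in>A" "S \<noteq> S1" "S \<noteq> S2" "S \<noteq> H" using memCd by auto
  have KH: "K \<noteq> H" using oldK s by auto
  obtain S' where s': "S'\<noteq>S" "(S',K)\<in>A" using ps_two[OF A s(1) a(2)] by blast
  have "S' \<noteq> S1" "S' \<noteq> S2" "S' \<noteq> H" using first1 first2 firstH s' KH a(2) by auto
  hence "(S',K)\<in>Cd" using memCd s' by auto
  thus "\<exists>S'. S'\<noteq>S \<and> (S',K)\<in>Cd" using s' by blast
next
  fix T1 T2 T3 K assume "(T1,K)\<in>Cd" "(T2,K)\<in>Cd" "(T3,K)\<in>Cd" "K\<noteq>{}"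
  hence "(T1,K)\<in>A" "(T2,K)\<in>A" "(T3,K)\<in>A" using memCd by auto
  thus "T1=T2 \<or> T1=T3 \<or> T2=T3" using ps_three[OF A] \<open>K\<noteq>{}\<close> by blast
qed

lemma A_le_Cd: "psle A Cd"
proof (rule psleI)
  fix S K assume s: "(S,K)\<in>A"
  show "\<exists>T K'. (T,K')\<in>Cd \<and> S\<subseteq>T \<and> (K\<subseteq>T \<or> K'=K)"
  proof (cases "S = S1 \<or> S = S2 \<or> S = H")
    case True
    hence "K = H \<or> K = {}" using first1 first2 firstH s by blast
    hence "S \<subseteq> S1\<union>S2\<union>H" "K \<subseteq> S1\<union>S2\<union>H" using True by auto
    moreover have "(S1\<union>S2\<union>H,{})\<in>Cd" using memCd by simp
    ultimately show ?thesis by blast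
  next
    case False
    hence "(S,K)\<in>Cd" using memCd s by simp
    thus ?thesis by blast
  qed
next
  fix T K S assume a: "(T,K)\<in>Cd" "K\<noteq>{}"
  hence "(T,K)\<in>A" using memCd by auto
  thus "\<exists>S'. (S',K)\<in>A \<and> S'\<subseteq>T" by blast
qed

lemma Cd_le: assumes B: "ps X B" and ab: "psle A B" and U: "(U,KU)\<in>B" "S1 \<subseteq> U" "S2 \<subseteq> U" "H \<subseteq> U"
  shows "psle Cd B"
proof (rule psleI)
  fix S K assume s: "(S,K)\<in>Cd"
  thus "\<exists>T K'. (T,K')\<in>B \<and> S\<subseteq>T \<and> (K\<subseteq>T \<or> K'=K)"
  proof (cases rule: memCdE)
    case 1
    hence "S \<subseteq> U" "K \<subseteq> U" using U by auto
    thus ?thesis using U(1) by blast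
  next
    case 2 thus ?thesis using psleD1[OF ab 2(1)] by simp
  qed
next
  fix T K S assume a: "(T,K)\<in>B" "K\<noteq>{}" "(S,K)\<in>Cd"
  hence s: "(S,K)\<in>A" "S \<noteq> S1" "S \<noteq> S2" using memCd by auto
  have KH: "K \<noteq> H" using oldK s by auto
  obtain S' where s': "(S',K)\<in>A" "S'\<subseteq>T" using psleD2[OF ab a(1,2) s(1)] by blast
  have "S' \<noteq> S1" "S' \<noteq> S2" "S' \<noteq> H" using first1 first2 firstH s' KH a(2) by auto
  hence "(S',K)\<in>Cd" using memCd s' by auto
  thus "\<exists>S'. (S',K)\<in>Cd \<and> S'\<subseteq>T" using s' by blast
qed

lemma parts_Cd: "parts Cd = insert (S1\<union>S2\<union>H) (parts A - {S1,S2,H})"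
proof
  show "parts Cd \<subseteq> insert (S1\<union>S2\<union>H) (parts A - {S1,S2,H})"
  proof
    fix S assume "S \<in> parts Cd"
    then obtain K where "(S,K)\<in>Cd" unfolding parts_def by auto
    thus "S \<in> insert (S1\<union>S2\<union>H) (parts A - {S1,S2,H})"
      by (cases rule: memCdE) (auto simp: parts_def)
  qed
  show "insert (S1\<union>S2\<union>H) (parts A - {S1,S2,H}) \<subseteq> parts Cd"
  proof
    fix S assume S: "S \<in> insert (S1\<union>S2\<union>H) (parts A - {S1,S2,H})"
    show "S \<in> parts Cd"
    proof (cases "S = S1\<union>S2\<union>H")
      case True
      hence "(S,{})\<in>Cd" using memCd by auto
      thus ?thesis unfolding parts_def by auto
    next
      case False
      then obtain K where "(S,K)\<in>A" "S \<noteq> S1" "S \<noteq> S2" "S \<noteq> H" using S unfolding parts_def by auto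
      hence "(S,K)\<in>Cd" using memCd by auto
      thus ?thesis unfolding parts_def by auto
    qed
  qed
qed

lemma holes_Cd: "holes Cd = holes A - {H}"
proof
  show "holes Cd \<subseteq> holes A - {H}"
  proof
    fix K assume "K \<in> holes Cd"
    then obtain S where s: "(S,K)\<in>Cd" "K \<noteq> {}" unfolding holes_def by auto
    hence s2: "(S,K)\<in>A" "S \<noteq> S1" "S \<noteq> S2" using memCd by auto
    hence "K \<noteq> H" using oldK by auto
    thus "K \<in> holes A - {H}" using s2 s(2) unfolding holes_def by auto
  qed
  show "holes A - {H} \<subseteq> holes Cd"
  proof
    fix K assume "K \<in> holes A - {H}"
    then obtain S where s: "(S,K)\<in>A" "K \<noteq> {}" "K \<noteq> H" unfolding holes_def by auto
    have "S \<noteq> S1" "S \<noteq> S2" "S \<noteq> H" using first1 first2 firstH s by auto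
    hence "(S,K)\<in>Cd" using memCd s by auto
    thus "K \<in> holes Cd" using s unfolding holes_def by auto
  qed
qed

lemma H_hole: "H \<in> holes A" using S1in Hne unfolding holes_def by auto

end



context
  fixes X :: "'a set" and A :: "'a sps" and S1 S2 H :: "'a set"
  assumes A: "ps X A" and S1in: "(S1,{})\<in>A" and S2in: "(S2,{})\<in>A" and Hin: "(H,{})\<in>A"
  and S12: "S1 \<noteq> S2" and S1H: "S1 \<noteq> H" and S2H: "S2 \<noteq> H"
  and nS1: "\<And>S. (S,S1)\<notin>A" and nS2: "\<And>S. (S,S2)\<notin>A" and nH: "\<And>S. (S,H)\<notin>A"
begin

definition "Ce = insert (S1,H) (insert (S2,H) (A - {(S1,{}),(S2,{})}))"

lemma e_facts: "S1 \<noteq> {}" "S2 \<noteq> {}" "H \<noteq> {}" "S1 \<subseteq> X" "S2 \<subseteq> X" "H \<subseteq> X"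
  using ps_sub[OF A S1in] ps_sub[OF A S2in] ps_sub[OF A Hin] by auto

lemma e_disj: "S1 \<inter> H = {}" "S2 \<inter> H = {}" "S1 \<inter> S2 = {}"
proof -
  show "S1 \<inter> H = {}" using ps_disj[OF A S1in Hin] S1H by blast
  show "S2 \<inter> H = {}" using ps_disj[OF A S2in Hin] S2H by blast
  show "S1 \<inter> S2 = {}" using ps_disj[OF A S1in S2in] S12 by blast
qed

lemma efirst1: "(S1,K)\<in>A \<Longrightarrow> K = {}" using ps_disj[OF A _ S1in] e_facts by auto
lemma efirst2: "(S2,K)\<in>A \<Longrightarrow> K = {}" using ps_disj[OF A _ S2in] e_facts by auto

lemma memCe: "(S,K) \<in> Ce \<longleftrightarrow> ((S = S1 \<or> S = S2) \<and> K = H) \<or> ((S,K)\<in>A \<and> S \<noteq> S1 \<and> S \<noteq> S2)"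
  unfolding Ce_def using efirst1 efirst2 e_facts by auto

lemma memCeE: assumes "(S,K) \<in> Ce"
  obtains "S = S1 \<or> S = S2" "K = H" | "(S,K)\<in>A" "S \<noteq> S1" "S \<noteq> S2"
proof -
  have "((S = S1 \<or> S = S2) \<and> K = H) \<or> ((S,K)\<in>A \<and> S \<noteq> S1 \<and> S \<noteq> S2)"
    using assms by (simp only: memCe)
  thus thesis using that by (elim disjE conjE) simp_all
qed

lemma e_old: "(S,K)\<in>A \<Longrightarrow> S \<noteq> S1 \<Longrightarrow> S \<noteq> S2 \<Longrightarrow> S \<inter> S1 = {} \<and> S \<inter> S2 = {}"
  using ps_disj[OF A _ S1in] ps_disj[OF A _ S2in] by blast

lemma Ce_ps: "ps X Ce"
proof (rule ps_intro)
  fix S K assume "(S,K)\<in>Ce"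
  thus "S \<subseteq> X \<and> K \<subseteq> X \<and> S \<noteq> {} \<and> S\<inter>K={}"
  proof (cases rule: memCeE)
    case 1 thus ?thesis using e_facts e_disj by auto
  next
    case 2 thus ?thesis using ps_sub[OF A] by simp
  qed
next
  fix x assume "x\<in>X"
  then obtain S K where sh: "(S,K)\<in>A" "x\<in>S" using ps_cover[OF A] by blast
  show "\<exists>S K. (S,K)\<in>Ce \<and> x\<in>S"
  proof (cases "S = S1 \<or> S = S2")
    case True
    hence "(S,H) \<in> Ce" using memCe by auto
    thus ?thesis using sh by blast
  next
    case False
    hence "(S,K) \<in> Ce" using memCe sh by auto
    thus ?thesis using sh by blast
  qed
next
  fix S K S' K' assume a: "(S,K)\<in>Ce" "(S',K')\<in>Ce" "S\<inter>S'\<noteq>{}"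
  from a(1) show "S=S' \<and> K=K'"
  proof (cases rule: memCeE)
    case 1
    from a(2) show ?thesis
    proof (cases rule: memCeE)
      case 1
      hence "S = S'" using \<open>S = S1 \<or> S = S2\<close> a(3) e_disj by auto
      thus ?thesis using 1 \<open>K = H\<close> by simp
    next
      case 2
      have "S' \<inter> S = {}" using e_old[OF 2] \<open>S = S1 \<or> S = S2\<close> by auto
      thus ?thesis using a(3) by auto
    qed
  next
    case 2
    from a(2) show ?thesis
    proof (cases rule: memCeE)
      case 1
      have "S \<inter> S' = {}" using e_old[OF \<open>(S,K)\<in>A\<close> \<open>S\<noteq>S1\<close> \<open>S\<noteq>S2\<close>] \<open>S' = S1 \<or> S' = S2\<close> by auto
      thus ?thesis using a(3) by auto
    next
      case 2
      show ?thesis using ps_disj[OF A \<open>(S,K)\<in>A\<close> 2(1) a(3)] .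
    qed
  qed
next
  fix S K assume a: "(S,K)\<in>Ce" "K\<noteq>{}"
  from a(1) show "(K,{})\<in>Ce"
  proof (cases rule: memCeE)
    case 1 thus ?thesis using Hin memCe S1H S2H by auto
  next
    case 2
    have "(K,{})\<in>A" using ps_pole[OF A 2(1) a(2)] .
    moreover have "K \<noteq> S1" "K \<noteq> S2" using nS1 nS2 2(1) by auto
    ultimately show ?thesis using memCe by auto
  qed
next
  fix S K assume a: "(S,K)\<in>Ce" "K\<noteq>{}"
  from a(1) show "\<exists>S'. S'\<noteq>S \<and> (S',K)\<in>Ce"
  proof (cases rule: memCeE)
    case 1
    show ?thesis
    proof (cases "S = S1")
      case True
      hence "(S2,K)\<in>Ce" "S2 \<noteq> S" using memCe 1 S12 by auto
      thus ?thesis by blast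
    next
      case False
      hence "(S1,K)\<in>Ce" "S1 \<noteq> S" using memCe 1 S12 by auto
      thus ?thesis by blast
    qed
  next
    case 2
    obtain S' where s': "S'\<noteq>S" "(S',K)\<in>A" using ps_two[OF A 2(1) a(2)] by blast
    have "S' \<noteq> S1" "S' \<noteq> S2" using efirst1 efirst2 s' a(2) by auto
    hence "(S',K)\<in>Ce" using memCe s' by auto
    thus ?thesis using s' by blast
  qed
next
  fix T1 T2 T3 K assume a: "(T1,K)\<in>Ce" "(T2,K)\<in>Ce" "(T3,K)\<in>Ce" "K\<noteq>{}"
  show "T1=T2 \<or> T1=T3 \<or> T2=T3"
  proof (cases "K = H")
    case True
    have "T \<in> {S1,S2}" if "(T,K)\<in>Ce" for T using that
    proof (cases rule: memCeE)
      case 1 thus ?thesis by auto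
    next
      case 2 thus ?thesis using nH True by auto
    qed
    hence "T1 \<in> {S1,S2}" "T2 \<in> {S1,S2}" "T3 \<in> {S1,S2}" using a by auto
    thus ?thesis by auto
  next
    case False
    hence "(T1,K)\<in>A" "(T2,K)\<in>A" "(T3,K)\<in>A" using a memCe by auto
    thus ?thesis using ps_three[OF A] \<open>K\<noteq>{}\<close> by blast
  qed
qed

lemma A_le_Ce: "psle A Ce"
proof (rule psleI)
  fix S K assume s: "(S,K)\<in>A"
  show "\<exists>T K'. (T,K')\<in>Ce \<and> S\<subseteq>T \<and> (K\<subseteq>T \<or> K'=K)"
  proof (cases "S = S1 \<or> S = S2")
    case True
    hence "K = {}" using efirst1 efirst2 s by blast
    moreover have "(S,H)\<in>Ce" using memCe True by simp
    ultimately show ?thesis by blast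
  next
    case False
    hence "(S,K)\<in>Ce" using memCe s by simp
    thus ?thesis by blast
  qed
next
  fix T K S assume a: "(T,K)\<in>Ce" "K\<noteq>{}" "(S,K)\<in>A"
  from a(1) show "\<exists>S'. (S',K)\<in>A \<and> S'\<subseteq>T"
  proof (cases rule: memCeE)
    case 1 thus ?thesis using nH a(3) by simp
  next
    case 2 thus ?thesis by blast
  qed
qed

lemma Ce_le: assumes B: "ps X B" and ab: "psle A B" and b1: "(S1,H)\<in>B" and b2: "(S2,H)\<in>B"
  shows "psle Ce B"
proof (rule psleI)
  fix S K assume s: "(S,K)\<in>Ce"
  thus "\<exists>T K'. (T,K')\<in>B \<and> S\<subseteq>T \<and> (K\<subseteq>T \<or> K'=K)"
  proof (cases rule: memCeE)
    case 1 
    hence "(S,K)\<in>B" using b1 b2 by auto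
    thus ?thesis by blast
  next
    case 2 thus ?thesis using psleD1[OF ab 2(1)] by simp
  qed
next
  fix T K S assume a: "(T,K)\<in>B" "K\<noteq>{}" "(S,K)\<in>Ce"
  show "\<exists>S'. (S',K)\<in>Ce \<and> S'\<subseteq>T"
  proof (cases "K = H")
    case True
    have "S1 = S2 \<or> S1 = T \<or> S2 = T" using ps_three[OF B b1 b2] a(1,2) True by simp
    hence "T = S1 \<or> T = S2" using S12 by auto
    hence "(T,K)\<in>Ce" using memCe True by auto
    thus ?thesis by blast
  next
    case False
    hence "(S,K)\<in>A" using a(3) memCe by auto
    then obtain S' where s': "(S',K)\<in>A" "S'\<subseteq>T" using psleD2[OF ab a(1,2)] by blast
    have "S' \<noteq> S1" "S' \<noteq> S2" using efirst1 efirst2 s' a(2) by auto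
    hence "(S',K)\<in>Ce" using memCe s' by auto
    thus ?thesis using s' by blast
  qed
qed

lemma parts_Ce: "parts Ce = parts A"
proof
  show "parts Ce \<subseteq> parts A"
  proof
    fix S assume "S \<in> parts Ce"
    then obtain K where "(S,K)\<in>Ce" unfolding parts_def by auto
    thus "S \<in> parts A"
      by (cases rule: memCeE) (auto simp: parts_def intro: S1in S2in)
  qed
  show "parts A \<subseteq> parts Ce"
  proof
    fix S assume "S \<in> parts A"
    then obtain K where s: "(S,K)\<in>A" unfolding parts_def by auto
    show "S \<in> parts Ce"
    proof (cases "S = S1 \<or> S = S2")
      case True
      hence "(S,H)\<in>Ce" using memCe by auto
      thus ?thesis unfolding parts_def by auto
    next
      case False
      hence "(S,K)\<in>Ce" using memCe s by auto
      thus ?thesis unfolding parts_def by auto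
    qed
  qed
qed

lemma holes_Ce: "holes Ce = insert H (holes A)"
proof
  show "holes Ce \<subseteq> insert H (holes A)"
  proof
    fix K assume "K \<in> holes Ce"
    then obtain S where s: "(S,K)\<in>Ce" "K \<noteq> {}" unfolding holes_def by auto
    from s(1) show "K \<in> insert H (holes A)"
    proof (cases rule: memCeE)
      case 1 thus ?thesis by simp
    next
      case 2 thus ?thesis using s(2) unfolding holes_def by auto
    qed
  qed
  show "insert H (holes A) \<subseteq> holes Ce"
  proof
    fix K assume K: "K \<in> insert H (holes A)"
    show "K \<in> holes Ce"
    proof (cases "K = H")
      case True
      hence "(S1,K)\<in>Ce" using memCe by simp
      thus ?thesis using True e_facts unfolding holes_def by auto
    next
      case False
      then obtain S where s: "(S,K)\<in>A" "K \<noteq> {}" using K unfolding holes_def by auto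
      have "S \<noteq> S1" "S \<noteq> S2" using efirst1 efirst2 s by auto
      hence "(S,K)\<in>Ce" using memCe s by auto
      thus ?thesis using s unfolding holes_def by auto
    qed
  qed
qed

lemma H_nothole: "H \<notin> holes A" using nH unfolding holes_def by auto

end



lemma fin_parts: "finite X \<Longrightarrow> ps X A \<Longrightarrow> finite (parts A)"
proof -
  assume f: "finite X" and A: "ps X A"
  have "parts A \<subseteq> Pow X"
  proof
    fix S assume "S \<in> parts A"
    then obtain H where "(S,H)\<in>A" unfolding parts_def by auto
    thus "S \<in> Pow X" using ps_sub[OF A] by auto
  qed
  thus ?thesis using f by (meson finite_Pow_iff finite_subset)
qed

lemma fin_holes: "finite X \<Longrightarrow> ps X A \<Longrightarrow> finite (holes A)"
proof -
  assume f: "finite X" and A: "ps X A"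
  have "holes A \<subseteq> Pow X"
  proof
    fix H assume "H \<in> holes A"
    then obtain S where "(S,H)\<in>A" unfolding holes_def by auto
    thus "H \<in> Pow X" using ps_sub[OF A] by auto
  qed
  thus ?thesis using f by (meson finite_Pow_iff finite_subset)
qed

lemma in_parts: "(S,H)\<in>A \<Longrightarrow> S \<in> parts A" unfolding parts_def by auto
lemma in_holes: "(S,H)\<in>A \<Longrightarrow> H \<noteq> {} \<Longrightarrow> H \<in> holes A" unfolding holes_def by auto

lemma newpart: assumes A: "ps X A" and "(S1,H1)\<in>A" "S1 \<subseteq> R" "\<And>S K. (S,K)\<in>A \<Longrightarrow> S = R \<Longrightarrow> S = S1"
  and "R \<noteq> S1"
  shows "R \<notin> parts A"
  using assms unfolding parts_def by auto

lemma satU: assumes A: "ps X A" and B: "ps X B" and ab: "psle A B"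
  and s: "(S,Q)\<in>A" "Q \<noteq> {}" "Q \<subseteq> U" and U: "(U,KU)\<in>B"
  and P1: "(P1,H1)\<in>A" "(P2,H2)\<in>A" "P1 \<noteq> P2" "P1 \<subseteq> U" "P2 \<subseteq> U"
  shows "S \<subseteq> U"
proof -
  obtain T K where t: "(T,K)\<in>B" "S\<subseteq>T" "Q\<subseteq>T \<or> K=Q" using psleD1[OF ab s(1)] by blast
  show ?thesis
  proof (cases "Q \<subseteq> T")
    case True
    hence "T \<inter> U \<noteq> {}" using s(2,3) by auto
    hence "T = U" using ps_disj[OF B t(1) U] by simp
    thus ?thesis using t by simp
  next
    case False
    hence "K = Q" using t by simp
    hence QB: "(Q,{})\<in>B" using ps_pole[OF B t(1)] s(2) by simp
    have "Q \<inter> U \<noteq> {}" using s(2,3) by auto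
    hence QU: "Q = U" using ps_disj[OF B QB U] by simp
    have QA: "(Q,{})\<in>A" using ps_pole[OF A s(1,2)] .
    have "P1 \<noteq> {}" "P2 \<noteq> {}" using ps_sub[OF A P1(1)] ps_sub[OF A P1(2)] by auto
    hence "P1 \<inter> Q \<noteq> {}" "P2 \<inter> Q \<noteq> {}" using P1 QU by auto
    hence "P1 = Q" "P2 = Q" using ps_disj[OF A P1(1) QA] ps_disj[OF A P1(2) QA] by auto
    thus ?thesis using P1(3) by simp
  qed
qed

lemma cover_step:
  assumes fX: "finite X" and A: "ps X A" and B: "ps X B" and ab: "psle A B" and neq: "A \<noteq> B"
  shows "\<exists>C. ps X C \<and> psle A C \<and> psle C B \<and> hh X C = Suc (hh X A)"
proof -
  have pn: "card (parts A) \<le> card X" using card_parts[OF A fX] .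
  have fp: "finite (parts A)" using fin_parts[OF fX A] .
  have fh: "finite (holes A)" using fin_holes[OF fX A] .
  show ?thesis
  proof (cases "\<exists>U KU P1 H1 P2 H2. (U,KU)\<in>B \<and> (P1,H1)\<in>A \<and> (P2,H2)\<in>A \<and> P1 \<noteq> P2 \<and> P1 \<subseteq> U \<and> P2 \<subseteq> U")
    case True
    then obtain U KU P1 H1 P2 H2 where U: "(U,KU)\<in>B" and P: "(P1,H1)\<in>A" "(P2,H2)\<in>A" "P1 \<noteq> P2" "P1 \<subseteq> U" "P2 \<subseteq> U"
      by blast
    have P1ne: "P1 \<noteq> {}" "P2 \<noteq> {}" using ps_sub[OF A P(1)] ps_sub[OF A P(2)] by auto
    have P12: "P1 \<inter> P2 = {}" using ps_disj[OF A P(1) P(2)] P(3) by auto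
    show ?thesis
    proof (cases "\<exists>S Q. (S,Q)\<in>A \<and> Q \<noteq> {} \<and> Q \<subseteq> U")
      case True
      then obtain S1 Q where s1: "(S1,Q)\<in>A" "Q \<noteq> {}" "Q \<subseteq> U" by blast
      obtain S2 where s2: "S2 \<noteq> S1" "(S2,Q)\<in>A" using ps_two[OF A s1(1,2)] by blast
      have S1U: "S1 \<subseteq> U" using satU[OF A B ab s1 U P] .
      have S2U: "S2 \<subseteq> U" using satU[OF A B ab s2(2) s1(2,3) U P] .
      let ?C = "Cd A S1 S2 Q"
      have Cps: "ps X ?C" using Cd_ps[OF A s1(1) s2(2) s2(1)[symmetric] s1(2)] .
      have le1: "psle A ?C" using A_le_Cd[OF A s1(1) s2(2) s2(1)[symmetric] s1(2)] .
      have le2: "psle ?C B" using Cd_le[OF A s1(1) s2(2) s2(1)[symmetric] s1(2) B ab U S1U S2U s1(3)] .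
      have pc: "parts ?C = insert (S1\<union>S2\<union>Q) (parts A - {S1,S2,Q})"
        using parts_Cd[OF A s1(1) s2(2) s2(1)[symmetric] s1(2)] .
      have hc: "holes ?C = holes A - {Q}" using holes_Cd[OF A s1(1) s2(2) s2(1)[symmetric] s1(2)] .
      have Qh: "Q \<in> holes A" using in_holes[OF s1(1,2)] .
      have QA: "(Q,{})\<in>A" using ps_pole[OF A s1(1,2)] .
      have d1: "S1 \<noteq> {}" "S1 \<inter> Q = {}" "S2 \<inter> Q = {}" using ps_sub[OF A s1(1)] ps_sub[OF A s2(2)] by auto
      have d2: "S1 \<inter> S2 = {}" using ps_disj[OF A s1(1) s2(2)] s2(1) by auto
      have dist: "S1 \<noteq> Q" "S2 \<noteq> Q" "S1 \<noteq> S2" using d1 d2 s1(2) s2(1) by auto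
      have mem: "S1 \<in> parts A" "S2 \<in> parts A" "Q \<in> parts A"
        using in_parts[OF s1(1)] in_parts[OF s2(2)] in_parts[OF QA] by auto
      have Rn: "S1\<union>S2\<union>Q \<notin> parts A - {S1,S2,Q}"
      proof
        assume "S1\<union>S2\<union>Q \<in> parts A - {S1,S2,Q}"
        then obtain K where k: "(S1\<union>S2\<union>Q,K)\<in>A" unfolding parts_def by auto
        have "(S1\<union>S2\<union>Q) \<inter> S1 \<noteq> {}" using d1 by auto
        hence "S1\<union>S2\<union>Q = S1" using ps_disj[OF A k s1(1)] by simp
        hence "S2 \<subseteq> S1" by auto
        thus False using d2 s2 ps_sub[OF A s2(2)] by auto
      qed
      have c3: "card {S1,S2,Q} = 3" using dist by auto
      have "card (parts A - {S1,S2,Q}) = card (parts A) - 3"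
        using card_Diff_subset[of "{S1,S2,Q}" "parts A"] mem c3 by auto
      hence cp: "card (parts ?C) = card (parts A) - 2"
        using pc Rn fp card_insert_disjoint[of "parts A - {S1,S2,Q}"] card_mono[OF fp, of "{S1,S2,Q}"] mem c3
        by auto
      have p3: "card (parts A) \<ge> 3" using card_mono[OF fp, of "{S1,S2,Q}"] mem c3 by auto
      have ch: "card (holes ?C) = card (holes A) - 1" using hc Qh fh by simp
      have q1: "card (holes A) \<ge> 1" using Qh fh by (metis One_nat_def Suc_leI card_gt_0_iff empty_iff)
      have "hh X ?C = Suc (hh X A)" unfolding hh_def using cp ch p3 q1 pn by simp
      thus ?thesis using Cps le1 le2 by blast
    next
      case False
      hence nop: "\<And>S Q. (S,Q)\<in>A \<Longrightarrow> Q \<noteq> {} \<Longrightarrow> \<not> Q \<subseteq> U" by blast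
      have np1: "\<And>S. (S,P1)\<notin>A" using nop P(4) P1ne by blast
      have np2: "\<And>S. (S,P2)\<notin>A" using nop P(5) P1ne by blast
      have mem: "P1 \<in> parts A" "P2 \<in> parts A" using in_parts P by auto
      have Rn: "P1 \<union> P2 \<notin> parts A - {P1,P2}"
      proof
        assume "P1\<union>P2 \<in> parts A - {P1,P2}"
        then obtain K where k: "(P1\<union>P2,K)\<in>A" unfolding parts_def by auto
        have "(P1\<union>P2) \<inter> P1 \<noteq> {}" using P1ne by auto
        hence "P1\<union>P2 = P1" using ps_disj[OF A k P(1)] by simp
        thus False using P12 P1ne by auto
      qed
      have c2: "card {P1,P2} = 2" using P(3) by auto
      have "card (parts A - {P1,P2}) = card (parts A) - 2"
        using card_Diff_subset[of "{P1,P2}" "parts A"] mem c2 by auto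
      moreover have p2: "card (parts A) \<ge> 2" using card_mono[OF fp, of "{P1,P2}"] mem c2 by auto
      ultimately have cins: "card (insert (P1 \<union> P2) (parts A - {P1,P2})) = card (parts A) - 1"
        using Rn fp by simp
      have hh1: "card (parts C) = card (parts A) - 1 \<Longrightarrow> holes C = holes A \<Longrightarrow> hh X C = Suc (hh X A)" for C
        unfolding hh_def using p2 pn by simp
      show ?thesis
      proof (cases "H1 = {}")
        case H1: True
        show ?thesis
        proof (cases "H2 = {}")
          case True
          let ?C = "Ca A P1 P2"
          have p1': "(P1,{})\<in>A" "(P2,{})\<in>A" using P H1 True by auto
          have "ps X ?C" using Ca_ps[OF A p1' P(3) np1 np2] .
          moreover have "psle A ?C" using A_le_Ca[OF A p1' P(3) np1 np2] .
          moreover have "psle ?C B" using Ca_le[OF A p1' P(3) np1 np2 B ab U P(4,5)] .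
          moreover have "hh X ?C = Suc (hh X A)"
            using hh1 parts_Ca[OF A p1' P(3) np1 np2] holes_Ca[OF A p1' P(3) np1 np2] cins by simp
          ultimately show ?thesis by blast
        next
          case False
          let ?C = "Cb A P2 P1 H2"
          have p1': "(P1,{})\<in>A" using P H1 by auto
          have "ps X ?C" using Cb_ps[OF A P(2) False p1' np1] .
          moreover have "psle A ?C" using A_le_Cb[OF A P(2) False p1' np1] .
          moreover have "psle ?C B" using Cb_le[OF A P(2) False p1' np1 B ab U P(5,4)] .
          moreover have "hh X ?C = Suc (hh X A)"
            using hh1 parts_Cb[OF A P(2) False p1' np1] holes_Cb[OF A P(2) False p1' np1] cins
            by (simp add: Un_commute insert_commute)
          ultimately show ?thesis by blast
        qed
      next
        case H1: False
        show ?thesis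
        proof (cases "H2 = {}")
          case True
          let ?C = "Cb A P1 P2 H1"
          have p2': "(P2,{})\<in>A" using P True by auto
          have "ps X ?C" using Cb_ps[OF A P(1) H1 p2' np2] .
          moreover have "psle A ?C" using A_le_Cb[OF A P(1) H1 p2' np2] .
          moreover have "psle ?C B" using Cb_le[OF A P(1) H1 p2' np2 B ab U P(4,5)] .
          moreover have "hh X ?C = Suc (hh X A)"
            using hh1 parts_Cb[OF A P(1) H1 p2' np2] holes_Cb[OF A P(1) H1 p2' np2] cins by simp
          ultimately show ?thesis by blast
        next
          case False
          have ext: "K = KU" if k: "(Pi,K)\<in>A" "K \<noteq> {}" "Pi \<subseteq> U" for Pi K
          proof -
            have Pne: "Pi \<noteq> {}" using ps_sub[OF A k(1)] by auto
            obtain T K' where t: "(T,K')\<in>B" "Pi\<subseteq>T" "K\<subseteq>T \<or> K'=K" using psleD1[OF ab k(1)] by blast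
            have "T \<inter> U \<noteq> {}" using t(2) k(3) Pne by auto
            hence tu: "T = U \<and> K' = KU" using ps_disj[OF B t(1) U] by simp
            have "\<not> K \<subseteq> U" using nop k(1,2) by blast
            thus ?thesis using t tu by auto
          qed
          have e1: "H1 = KU" using ext[OF P(1) H1 P(4)] .
          have e2: "H2 = KU" using ext[OF P(2) False P(5)] .
          have KUne: "KU \<noteq> {}" using H1 e1 by simp
          obtain U2 where u2: "U2 \<noteq> U" "(U2,KU)\<in>B" using ps_two[OF B U KUne] by blast
          have "(P1,KU)\<in>A" using P(1) e1 by simp
          then obtain S' where s': "(S',KU)\<in>A" "S' \<subseteq> U2" using psleD2[OF ab u2(2) KUne] by blast
          have "P1 = P2 \<or> P1 = S' \<or> P2 = S'" using ps_three[OF A _ _ s'(1) KUne] P(1,2) e1 e2 by simp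
          hence "S' \<subseteq> U" using P(3,4,5) by auto
          moreover have "S' \<noteq> {}" using ps_sub[OF A s'(1)] by auto
          ultimately have "U2 \<inter> U \<noteq> {}" using s'(2) by auto
          hence "U2 = U" using ps_disj[OF B u2(2) U] by simp
          thus ?thesis using u2(1) by simp
        qed
      qed
    qed
  next
    case False
    hence one: "\<And>U KU P1 H1 P2 H2. (U,KU)\<in>B \<Longrightarrow> (P1,H1)\<in>A \<Longrightarrow> (P2,H2)\<in>A \<Longrightarrow> P1 \<subseteq> U \<Longrightarrow> P2 \<subseteq> U \<Longrightarrow> P1 = P2"
      by blast
    have eq1: "\<exists>K. (S,K)\<in>B" if s: "(S,H)\<in>A" for S H
    proof -
      obtain T K where t: "(T,K)\<in>B" "S\<subseteq>T" using psleD1[OF ab s] by blast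
      have "T \<subseteq> S"
      proof
        fix y assume y: "y \<in> T"
        hence "y \<in> X" using ps_sub[OF B t(1)] by auto
        then obtain S' H' where s': "(S',H')\<in>A" "y \<in> S'" using ps_cover[OF A] by blast
        obtain T' K' where t': "(T',K')\<in>B" "S'\<subseteq>T'" using psleD1[OF ab s'(1)] by blast
        have "T' \<inter> T \<noteq> {}" using y s'(2) t'(2) by auto
        hence "T' = T" using ps_disj[OF B t'(1) t(1)] by simp
        hence "S' = S" using one[OF t(1) s'(1) s] t'(2) t(2) by simp
        thus "y \<in> S" using s' by simp
      qed
      hence "T = S" using t by simp
      thus ?thesis using t by blast
    qed
    have eq2: "\<exists>H. (T,H)\<in>A" if t: "(T,K)\<in>B" for T K
    proof -
      obtain y where y: "y \<in> T" using ps_sub[OF B t] by auto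
      hence "y \<in> X" using ps_sub[OF B t] by auto
      then obtain S H where s: "(S,H)\<in>A" "y \<in> S" using ps_cover[OF A] by blast
      obtain K' where "(S,K')\<in>B" using eq1[OF s(1)] by blast
      moreover have "S \<inter> T \<noteq> {}" using y s by auto
      ultimately have "S = T" using ps_disj[OF B _ t] by blast
      thus ?thesis using s by blast
    qed
    have hA: "(S,H)\<in>B" if s: "(S,H)\<in>A" "H \<noteq> {}" for S H
    proof -
      obtain T K where t: "(T,K)\<in>B" "S\<subseteq>T" "H\<subseteq>T \<or> K=H" using psleD1[OF ab s(1)] by blast
      obtain K' where k': "(S,K')\<in>B" using eq1[OF s(1)] by blast
      have "S \<noteq> {}" "S \<inter> H = {}" using ps_sub[OF A s(1)] by auto
      hence "S \<inter> T \<noteq> {}" using t(2) by auto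
      hence "S = T" using ps_disj[OF B k' t(1)] by simp
      hence "\<not> H \<subseteq> T" using \<open>S \<inter> H = {}\<close> s(2) by auto
      hence "K = H" using t(3) by simp
      thus ?thesis using t(1) \<open>S = T\<close> by simp
    qed
    have "\<exists>S1 H. (S1,H)\<in>B \<and> H \<noteq> {} \<and> (S1,H)\<notin>A"
    proof (rule ccontr)
      assume "\<not> ?thesis"
      hence allB: "\<And>S1 H. (S1,H)\<in>B \<Longrightarrow> H \<noteq> {} \<Longrightarrow> (S1,H)\<in>A" by blast
      have "A \<subseteq> B"
      proof
        fix p assume "p \<in> A"
        moreover obtain S H where p: "p = (S,H)" by force
        ultimately have s: "(S,H)\<in>A" by simp
        show "p \<in> B"
        proof (cases "H = {}")
          case False thus ?thesis using hA s p by simp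
        next
          case True
          obtain K where k: "(S,K)\<in>B" using eq1[OF s] by blast
          have "K = {}"
          proof (rule ccontr)
            assume "K \<noteq> {}"
            hence "(S,K)\<in>A" using allB k by simp
            hence "K = H" using ps_disj[OF A _ s] ps_sub[OF A s] by auto
            thus False using True \<open>K \<noteq> {}\<close> by simp
          qed
          thus ?thesis using k p True by simp
        qed
      qed
      moreover have "B \<subseteq> A"
      proof
        fix p assume "p \<in> B"
        moreover obtain T K where p: "p = (T,K)" by force
        ultimately have t: "(T,K)\<in>B" by simp
        show "p \<in> A"
        proof (cases "K = {}")
          case False thus ?thesis using allB t p by simp
        next
          case True
          obtain H where h: "(T,H)\<in>A" using eq2[OF t] by blast
          have "H = {}"
          proof (rule ccontr)
            assume "H \<noteq> {}"
            hence "(T,H)\<in>B" using hA h by simp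
            hence "H = K" using ps_disj[OF B _ t] ps_sub[OF B t] by auto
            thus False using True \<open>H \<noteq> {}\<close> by simp
          qed
          thus ?thesis using h p True by simp
        qed
      qed
      ultimately show False using neq by simp
    qed
    then obtain S1 H where b1: "(S1,H)\<in>B" "H \<noteq> {}" "(S1,H)\<notin>A" by blast
    obtain S2 where b2: "S2 \<noteq> S1" "(S2,H)\<in>B" using ps_two[OF B b1(1,2)] by blast
    obtain H1 where a1: "(S1,H1)\<in>A" using eq2[OF b1(1)] by blast
    have H1e: "H1 = {}"
    proof (rule ccontr)
      assume "H1 \<noteq> {}"
      hence "(S1,H1)\<in>B" using hA a1 by simp
      hence "H1 = H" using ps_disj[OF B _ b1(1)] ps_sub[OF B b1(1)] by auto
      thus False using a1 b1(3) by simp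
    qed
    obtain H2 where a2: "(S2,H2)\<in>A" using eq2[OF b2(2)] by blast
    have H2e: "H2 = {}"
    proof (rule ccontr)
      assume H2: "H2 \<noteq> {}"
      hence "(S2,H2)\<in>B" using hA a2 by simp
      hence "H2 = H" using ps_disj[OF B _ b2(2)] ps_sub[OF B b2(2)] by auto
      hence a2': "(S2,H)\<in>A" using a2 by simp
      obtain S3 where s3: "S3 \<noteq> S2" "(S3,H)\<in>A" using ps_two[OF A a2' b1(2)] by blast
      have "(S3,H)\<in>B" using hA s3(2) b1(2) by simp
      hence "S1 = S2 \<or> S1 = S3 \<or> S2 = S3" using ps_three[OF B b1(1) b2(2) _ b1(2)] by simp
      thus False using b2(1) s3 b1(3) by auto
    qed
    have HB: "(H,{})\<in>B" using ps_pole[OF B b1(1,2)] .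
    obtain HH where hh0: "(H,HH)\<in>A" using eq2[OF HB] by blast
    have HHe: "HH = {}"
    proof (rule ccontr)
      assume "HH \<noteq> {}"
      hence "(H,HH)\<in>B" using hA hh0 by simp
      hence "HH = {}" using ps_disj[OF B _ HB] b1(2) by auto
      thus False using \<open>HH \<noteq> {}\<close> by simp
    qed
    have nH: "\<And>S. (S,H)\<notin>A"
    proof
      fix S assume s: "(S,H)\<in>A"
      hence "(S,H)\<in>B" using hA b1(2) by simp
      hence "S1 = S2 \<or> S1 = S \<or> S2 = S" using ps_three[OF B b1(1) b2(2) _ b1(2)] by simp
      moreover have "S \<noteq> S1" using s b1(3) by auto
      moreover have "S \<noteq> S2" using s a2 H2e ps_disj[OF A s a2] ps_sub[OF A s] b1(2) by auto
      ultimately show False using b2(1) by auto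
    qed
    have nS: "(S,Si)\<notin>A" if si: "(Si,H)\<in>B" for S Si
    proof
      assume s: "(S,Si)\<in>A"
      have "Si \<noteq> {}" using ps_sub[OF B si] by auto
      hence "(S,Si)\<in>B" using hA s by simp
      hence "(Si,{})\<in>B" using ps_pole[OF B] \<open>Si \<noteq> {}\<close> by simp
      hence "H = {}" using ps_disj[OF B si] ps_sub[OF B si] by auto
      thus False using b1(2) by simp
    qed
    have nS1: "\<And>S. (S,S1)\<notin>A" using nS[OF b1(1)] .
    have nS2: "\<And>S. (S,S2)\<notin>A" using nS[OF b2(2)] .
    have S1H: "S1 \<noteq> H" using ps_sub[OF B b1(1)] by auto
    have S2H: "S2 \<noteq> H" using ps_sub[OF B b2(2)] by auto
    have e1: "(S1,{})\<in>A" "(S2,{})\<in>A" "(H,{})\<in>A" using a1 H1e a2 H2e hh0 HHe by auto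
    have S12: "S1 \<noteq> S2" using b2(1) by simp
    let ?C = "Ce A S1 S2 H"
    have "ps X ?C" using Ce_ps[OF A e1 S12 S1H S2H nS1 nS2 nH] .
    moreover have "psle A ?C" using A_le_Ce[OF A e1 S12 S1H S2H nS1 nS2 nH] .
    moreover have "psle ?C B" using Ce_le[OF A e1 S12 S1H S2H nS1 nS2 nH B ab b1(1) b2(2)] .
    moreover have "hh X ?C = Suc (hh X A)"
    proof -
      have "parts ?C = parts A" using parts_Ce[OF A e1 S12 S1H S2H nS1 nS2 nH] .
      moreover have "holes ?C = insert H (holes A)" using holes_Ce[OF A e1 S12 S1H S2H nS1 nS2 nH] .
      moreover have "H \<notin> holes A" using H_nothole[OF A e1 S12 S1H S2H nS1 nS2 nH] .
      ultimately show ?thesis unfolding hh_def using fh pn by simp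
    qed
    ultimately show ?thesis by blast
  qed
qed



theorem mainTheorem8:
  fixes X :: "'a set"
  assumes "finite X" and "X \<noteq> {}"
  shows "bounded_poset (polestars X) sps_le
       \<and> graded (polestars X) sps_le
       \<and> is_min (polestars X) sps_le {({x}, {}) | x. x \<in> X}
       \<and> is_max (polestars X) sps_le {(X, {})}
       \<and> (\<forall>\<S>\<in>polestars X.
            height (polestars X) sps_le \<S> = card X - card (parts \<S>) + card (holes \<S>)
          \<and> height (polestars X) sps_le \<S> \<in> {0..card X - 1})"
proof -
  note fX = assms(1)
  have mem: "\<And>S. S \<in> polestars X \<longleftrightarrow> ps X S" unfolding polestars_def by simp
  have finP: "finite (polestars X)"
  proof (rule finite_subset)
    show "polestars X \<subseteq> Pow (Pow X \<times> Pow X)" using ps_finite mem by blast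
    show "finite (Pow (Pow X \<times> Pow X))" using fX by simp
  qed
  have po: "partial_order_on' (polestars X) sps_le"
    unfolding partial_order_on'_def
  proof (intro conjI ballI impI)
    fix a assume "a \<in> polestars X"
    thus "sps_le a a" using sps_le_iff psle_refl mem by blast
  next
    fix a b assume ab: "a \<in> polestars X" "b \<in> polestars X" "sps_le a b \<and> sps_le b a"
    hence "ps X a" "ps X b" using mem by auto
    thus "a = b" using psle_antisym sps_le_iff ab(3) by blast
  next
    fix a b c assume abc: "a \<in> polestars X" "b \<in> polestars X" "c \<in> polestars X" "sps_le a b \<and> sps_le b c"
    hence p: "ps X a" "ps X b" "ps X c" using mem by auto
    hence "psle a b" "psle b c" using sps_le_iff abc(4) by blast+
    hence "psle a c" using psle_trans[OF p] by blast
    thus "sps_le a c" using sps_le_iff p by blast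
  qed
  have pminP: "pmin X \<in> polestars X" using pmin_ps mem by blast
  have pmaxP: "pmax X \<in> polestars X" using pmax_ps[OF assms(2)] mem by blast
  interpret g: gpos "polestars X" sps_le "hh X" "pmin X" "pmax X"
  proof
    show "finite (polestars X)" by (rule finP)
    show "partial_order_on' (polestars X) sps_le" by (rule po)
    show "pmin X \<in> polestars X" by (rule pminP)
    show "pmax X \<in> polestars X" by (rule pmaxP)
    fix a assume "a \<in> polestars X"
    hence a: "ps X a" using mem by simp
    show "sps_le (pmin X) a" using pmin_le[OF a] sps_le_iff[OF pmin_ps a] by simp
    show "sps_le a (pmax X)" using le_pmax[OF a] sps_le_iff[OF a pmax_ps[OF assms(2)]] by simp
  next
    show "hh X (pmin X) = 0" using hh_pmin[OF fX] .
  next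
    fix a b assume ab: "a \<in> polestars X" "b \<in> polestars X" "sps_le a b" "a \<noteq> b"
    hence p: "ps X a" "ps X b" using mem by auto
    hence "psle a b" using sps_le_iff ab(3) by blast
    then obtain C where C: "ps X C" "psle a C" "psle C b" "hh X C = Suc (hh X a)"
      using cover_step[OF fX p _ ab(4)] by blast
    have "sps_le a C" "sps_le C b" using C sps_le_iff p by blast+
    thus "\<exists>c\<in>polestars X. sps_le a c \<and> sps_le c b \<and> hh X c = Suc (hh X a)"
      using C mem by blast
  qed
  have e1: "pmin X = {({x}, {}) | x. x \<in> X}" by (simp add: pmin_def)
  have e2: "pmax X = {(X, {})}" by (simp add: pmax_def)
  have mi: "is_min (polestars X) sps_le (pmin X)" unfolding is_min_def using pminP g.minle by blast
  have ma: "is_max (polestars X) sps_le (pmax X)" unfolding is_max_def using pmaxP g.lemax by blast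
  have hs: "\<forall>\<S>\<in>polestars X.
            height (polestars X) sps_le \<S> = card X - card (parts \<S>) + card (holes \<S>)
          \<and> height (polestars X) sps_le \<S> \<in> {0..card X - 1}"
  proof
    fix S assume S: "S \<in> polestars X"
    have "height (polestars X) sps_le S = hh X S" using g.height_eq[OF S] .
    moreover have "hh X S \<le> hh X (pmax X)" using g.mono[OF S pmaxP g.lemax[OF S]] .
    hence "hh X S \<le> card X - 1" using hh_pmax[of X] by simp
    moreover have "hh X S = card X - card (parts S) + card (holes S)" by (simp add: hh_def)
    ultimately show "height (polestars X) sps_le S = card X - card (parts S) + card (holes S)
          \<and> height (polestars X) sps_le S \<in> {0..card X - 1}"
      by simp
  qed
  show ?thesis unfolding e1[symmetric] e2[symmetric] using g.bounded g.graded mi ma hs by (intro conjI)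
qed

end
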